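(* Let $r\ge3$ and $1\le s\le r-1$, let $\Gamma=C(r,s)$ be a Praeger-Xu graph, and let $g\in\mathrm{Aut}(\Gamma)$, $g\ne 1$, with $\mathrm{fpr}(E\Gamma,g)>1/3$. Then $3s<2r-3$, and either $g\in K$ or $(r,s)=(4,1)$. Moreover, every edge fixed (setwise) by $g$ has both of its end-vertices fixed by $g$.
   Context: Praeger-Xu graphs: the digraph $\vec C(r,1)$ has vertex set $\mathbb{Z}_r\times\mathbb{Z}_2$ and arcs $((x,i),(x+1,j))$ for all $x$, $i,j$. For $2\le s\le r-1$, $\vec C(r,s)$ has as vertices the sequences $(v_0,\dots,v_{s-1})$ with each $(v_j,v_{j+1})$ an arc of $\vec C(r,1)$, with an arc from $(v_0,\dots,v_{s-1})$ to $(v_1,\dots,v_{s-1},u)$ for each out-neighbour $u$ of $v_{s-1}$. $C(r,s)$ is the underlying undirected simple graph of $\vec C(r,s)$ (for $s=1$, of $\vec C(r,1)$). For $i\in\mathbb{Z}_r$, $\tau_i$ is the permutation of $\mathbb{Z}_r\times\mathbb{Z}_2$ swapping $(i,0)$ and $(i,1)$ and fixing all other points; it acts on vertices of $C(r,s)$ coordinatewise and is an automorphism. $K=\langle\tau_i: i\in\mathbb{Z}_r\rangle\cong C_2^r$. $\mathrm{fpr}(E\Gamma,g)$ is the proportion of edges $\{a,b\}$ with $\{a^g,b^g\}=\{a,b\}$. *)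

theory Defs
  imports Main "HOL.Real"
begin

text \<open>Points of Z_r x Z_2, represented as pairs (x,i) with x < r and i < 2.\<close>
definition PXpt :: "nat \<Rightarrow> (nat \<times> nat) set" where
  "PXpt r = {(x, i). x < r \<and> i < 2}"

definition PXarc1 :: "nat \<Rightarrow> nat \<times> nat \<Rightarrow> nat \<times> nat \<Rightarrow> bool" where
  "PXarc1 r p q \<longleftrightarrow> p \<in> PXpt r \<and> q \<in> PXpt r \<and> fst q = (fst p + 1) mod r"

definition PXV :: "nat \<Rightarrow> nat \<Rightarrow> (nat \<times> nat) list set" where
  "PXV r s = {vs. length vs = s \<and> set vs \<subseteq> PXpt r \<and>
                 (\<forall>j. Suc j < s \<longrightarrow> PXarc1 r (vs ! j) (vs ! Suc j))}"

definition PXarc :: "nat \<Rightarrow> nat \<Rightarrow> (nat \<times> nat) list \<Rightarrow> (nat \<times> nat) list \<Rightarrow> bool" where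
  "PXarc r s v w \<longleftrightarrow> v \<in> PXV r s \<and> w \<in> PXV r s \<and> tl v = butlast w \<and> PXarc1 r (last v) (last w)"

definition PXadj :: "nat \<Rightarrow> nat \<Rightarrow> (nat \<times> nat) list \<Rightarrow> (nat \<times> nat) list \<Rightarrow> bool" where
  "PXadj r s a b \<longleftrightarrow> a \<noteq> b \<and> (PXarc r s a b \<or> PXarc r s b a)"

definition PXE :: "nat \<Rightarrow> nat \<Rightarrow> (nat \<times> nat) list set set" where
  "PXE r s = {{a, b} | a b. PXadj r s a b}"

definition is_graph_aut :: "'v set \<Rightarrow> ('v \<Rightarrow> 'v \<Rightarrow> bool) \<Rightarrow> ('v \<Rightarrow> 'v) \<Rightarrow> bool" where
  "is_graph_aut V adj g \<longleftrightarrow> bij_betw g V V \<and> (\<forall>a\<in>V. \<forall>b\<in>V. adj a b \<longleftrightarrow> adj (g a) (g b))"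

definition PXtau :: "nat \<Rightarrow> nat \<times> nat \<Rightarrow> nat \<times> nat" where
  "PXtau i p = (if fst p = i then (fst p, 1 - snd p) else p)"

inductive_set PXK :: "nat \<Rightarrow> (nat \<times> nat \<Rightarrow> nat \<times> nat) set" for r where
  PXK_id: "id \<in> PXK r"
| PXK_step: "f \<in> PXK r \<Longrightarrow> i < r \<Longrightarrow> PXtau i \<circ> f \<in> PXK r"

definition fpr_edges :: "'v set set \<Rightarrow> ('v \<Rightarrow> 'v) \<Rightarrow> real" where
  "fpr_edges E g = real (card {e \<in> E. g ` e = e}) / real (card E)"

end

theory Submission
  imports Defs
begin


lemma mod_cancel_nat: "((a::nat) + b) mod n = (a + c) mod n \<longleftrightarrow> b mod n = c mod n"
proof (cases "b \<le> c")
  case True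
  then show ?thesis using mod_eq_dvd_iff_nat[of "a+b" "a+c" n] mod_eq_dvd_iff_nat[of b c n] by (simp add: eq_commute)
next
  case False
  then show ?thesis using mod_eq_dvd_iff_nat[of "a+c" "a+b" n] mod_eq_dvd_iff_nat[of c b n] by auto
qed

lemma mod_self_shift: "(x::nat) < n \<Longrightarrow> (x + k) mod n = x \<longleftrightarrow> k mod n = 0"
  using mod_cancel_nat[of x k n 0] by simp

locale px =
  fixes r s :: nat
  assumes r3: "3 \<le> r" and s1: "1 \<le> s" and sr: "s < r"
begin

abbreviation "V \<equiv> PXV r s"

definition lay :: "(nat \<times> nat) list \<Rightarrow> nat" where "lay v = fst (v ! 0)"

lemma V_iff: "v \<in> V \<longleftrightarrow> length v = s \<and> lay v < r \<and>
   (\<forall>j<s. fst (v!j) = (lay v + j) mod r \<and> snd (v!j) < 2)"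
proof
  assume v: "v \<in> V"
  hence len: "length v = s" and sub: "set v \<subseteq> PXpt r"
    and arc: "\<And>j. Suc j < s \<Longrightarrow> PXarc1 r (v ! j) (v ! Suc j)"
    by (auto simp: PXV_def)
  have pt: "j < s \<Longrightarrow> fst (v!j) < r \<and> snd (v!j) < 2" for j
  proof -
    assume "j < s" then have "v!j \<in> set v" using len by simp
    then have "v!j \<in> PXpt r" using sub by blast
    then show ?thesis by (auto simp: PXpt_def)
  qed
  have l: "lay v < r" using pt[of 0] s1 by (simp add: lay_def)
  have "j < s \<Longrightarrow> fst (v!j) = (lay v + j) mod r" for j
  proof (induction j)
    case 0 then show ?case using l by (simp add: lay_def)
  next
    case (Suc j)
    then have "fst (v ! Suc j) = (fst (v!j) + 1) mod r" using arc[of j] by (simp add: PXarc1_def)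
    also have "\<dots> = (lay v + Suc j) mod r" using Suc by (simp add: mod_Suc_eq)
    finally show ?case .
  qed
  then show "length v = s \<and> lay v < r \<and> (\<forall>j<s. fst (v!j) = (lay v + j) mod r \<and> snd (v!j) < 2)"
    using len l pt by auto
next
  assume h: "length v = s \<and> lay v < r \<and> (\<forall>j<s. fst (v!j) = (lay v + j) mod r \<and> snd (v!j) < 2)"
  have "set v \<subseteq> PXpt r"
  proof
    fix p assume "p \<in> set v"
    then obtain j where "j < s" "p = v!j" using h by (auto simp: in_set_conv_nth)
    then have "fst p < r" "snd p < 2" using h r3 by auto
    then show "p \<in> PXpt r" by (cases p) (auto simp: PXpt_def)
  qed
  moreover have "PXarc1 r (v ! j) (v ! Suc j)" if "Suc j < s" for j
    using h that r3 \<open>set v \<subseteq> PXpt r\<close> nth_mem[of j v] nth_mem[of "Suc j" v]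
    by (auto simp: PXarc1_def mod_Suc_eq)
  ultimately show "v \<in> V" using h by (auto simp: PXV_def)
qed

lemma V_len: "v \<in> V \<Longrightarrow> length v = s" by (simp add: V_iff)
lemma V_lay: "v \<in> V \<Longrightarrow> lay v < r" by (simp add: V_iff)
lemma V_fst: "v \<in> V \<Longrightarrow> j < s \<Longrightarrow> fst (v!j) = (lay v + j) mod r" by (simp add: V_iff)
lemma V_snd: "v \<in> V \<Longrightarrow> j < s \<Longrightarrow> snd (v!j) < 2" by (simp add: V_iff)
lemma V_nth: "v \<in> V \<Longrightarrow> j < s \<Longrightarrow> v!j = ((lay v + j) mod r, snd (v!j))"
  by (metis V_fst prod.collapse)
lemma V_pt: "v \<in> V \<Longrightarrow> j < s \<Longrightarrow> v!j \<in> PXpt r"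
proof -
  assume v: "v \<in> V" and j: "j < s"
  have "v!j = ((lay v + j) mod r, snd (v!j))" by (rule V_nth[OF v j])
  moreover have "snd (v!j) < 2" by (rule V_snd[OF v j])
  ultimately show ?thesis using r3 unfolding PXpt_def by (metis (mono_tags, lifting) case_prodI le_trans mem_Collect_eq mod_less_divisor not_less zero_less_numeral not_numeral_le_zero)
qed
lemma V_ne: "v \<in> V \<Longrightarrow> v \<noteq> []" using V_len[of v] s1 by auto

lemma V_eqI: "v \<in> V \<Longrightarrow> w \<in> V \<Longrightarrow> lay v = lay w \<Longrightarrow> (\<And>j. j < s \<Longrightarrow> snd (v!j) = snd (w!j)) \<Longrightarrow> v = w"
  by (rule nth_equalityI) (auto simp: V_len, metis V_nth V_len)

definition outv :: "(nat \<times> nat) list \<Rightarrow> nat \<Rightarrow> (nat \<times> nat) list" where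
  "outv v c = tl v @ [((lay v + s) mod r, c)]"
definition invv :: "(nat \<times> nat) list \<Rightarrow> nat \<Rightarrow> (nat \<times> nat) list" where
  "invv v c = ((lay v + r - 1) mod r, c) # butlast v"

lemma outv_len: "v \<in> V \<Longrightarrow> length (outv v c) = s"
  using V_len[of v] V_ne[of v] s1 by (auto simp: outv_def)
lemma outv_nth: "v \<in> V \<Longrightarrow> j < s \<Longrightarrow> outv v c ! j = (if Suc j < s then v ! Suc j else ((lay v + s) mod r, c))"
  using V_len[of v] V_ne[of v]
  by (auto simp: outv_def nth_append nth_tl)
lemma invv_len: "v \<in> V \<Longrightarrow> length (invv v c) = s"
  using V_len V_ne s1 by (auto simp: invv_def)
lemma invv_nth: "v \<in> V \<Longrightarrow> j < s \<Longrightarrow> invv v c ! j = (if j = 0 then ((lay v + r - 1) mod r, c) else v ! (j - 1))"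
  using V_len[of v] V_ne[of v]
  by (cases j) (auto simp: invv_def nth_butlast)

lemma lay_outv: "v \<in> V \<Longrightarrow> lay (outv v c) = (lay v + 1) mod r"
proof -
  assume v: "v \<in> V"
  show ?thesis
  proof (cases "1 < s")
    case True
    then show ?thesis using outv_nth[OF v, of 0 c] V_fst[OF v, of 1] by (simp add: lay_def)
  next
    case False
    then have "s = 1" using s1 by simp
    then show ?thesis using outv_nth[OF v, of 0 c] by (simp add: lay_def)
  qed
qed

lemma lay_invv: "v \<in> V \<Longrightarrow> lay (invv v c) = (lay v + r - 1) mod r"
  using invv_nth[of v 0 c] s1 by (simp add: lay_def)

lemma outv_V: "v \<in> V \<Longrightarrow> c < 2 \<Longrightarrow> outv v c \<in> V"
proof -
  assume v: "v \<in> V" and c: "c < 2"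
  have l: "lay (outv v c) = (lay v + 1) mod r" by (rule lay_outv[OF v])
  show ?thesis unfolding V_iff
  proof (intro conjI allI impI)
    show "length (outv v c) = s" using outv_len[OF v] .
    show "lay (outv v c) < r" using l r3 by simp
  next
    fix j assume j: "j < s"
    show "fst (outv v c ! j) = (lay (outv v c) + j) mod r"
    proof (cases "Suc j < s")
      case True then show ?thesis
        using outv_nth[OF v j, of c] V_fst[OF v, of "Suc j"] l by (simp add: mod_add_left_eq)
    next
      case False then have "Suc j = s" using j by simp
      then show ?thesis using outv_nth[OF v j, of c] l by (simp add: mod_add_left_eq flip: \<open>Suc j = s\<close>)
    qed
    show "snd (outv v c ! j) < 2" using outv_nth[OF v j, of c] V_snd[OF v, of "Suc j"] c by auto
  qed
qed

lemma invv_V: "v \<in> V \<Longrightarrow> c < 2 \<Longrightarrow> invv v c \<in> V"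
proof -
  assume v: "v \<in> V" and c: "c < 2"
  have l: "lay (invv v c) = (lay v + r - 1) mod r" by (rule lay_invv[OF v])
  show ?thesis unfolding V_iff
  proof (intro conjI allI impI)
    show "length (invv v c) = s" using invv_len[OF v] .
    show "lay (invv v c) < r" using l r3 by simp
  next
    fix j assume j: "j < s"
    show "fst (invv v c ! j) = (lay (invv v c) + j) mod r"
    proof (cases j)
      case 0 then show ?thesis using invv_nth[OF v j, of c] l by simp
    next
      case (Suc i)
      have "fst (invv v c ! j) = (lay v + i) mod r" using invv_nth[OF v j, of c] V_fst[OF v, of i] Suc j by simp
      also have "\<dots> = (lay v + r - 1 + j) mod r" using Suc r3 
        by (metis add.commute add_Suc_right add_diff_cancel_left' mod_add_self2 add_diff_assoc2 le_add2 plus_1_eq_Suc r3 Nat.le_trans le_numeral_extra(4) one_le_numeral)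
      also have "\<dots> = (lay (invv v c) + j) mod r" using l by (simp add: mod_add_left_eq)
      finally show ?thesis .
    qed
    show "snd (invv v c ! j) < 2" using invv_nth[OF v j, of c] V_snd[OF v, of "j - 1"] c j by auto
  qed
qed

lemma modr1: "x < r \<Longrightarrow> ((x + r - 1) mod r + 1) mod r = x"
proof -
  assume x: "x < r"
  have "((x + r - 1) mod r + 1) mod r = (x + r - 1 + 1) mod r" by (simp add: mod_Suc_eq)
  also have "x + r - 1 + 1 = x + r" using r3 by simp
  finally show ?thesis using x by simp
qed
lemma modr2: "x < r \<Longrightarrow> ((x + 1) mod r + r - 1) mod r = x"
proof -
  assume x: "x < r"
  have "(x + 1) mod r + r - 1 = (x + 1) mod r + (r - 1)" using r3 by simp
  then have "((x + 1) mod r + r - 1) mod r = (x + 1 + (r - 1)) mod r" by (simp add: mod_add_left_eq)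
  also have "x + 1 + (r - 1) = x + r" using r3 by simp
  finally show ?thesis using x by simp
qed

lemma invv_outv: "v \<in> V \<Longrightarrow> c < 2 \<Longrightarrow> invv (outv v c) (snd (v!0)) = v"
proof -
  assume v: "v \<in> V" and c: "c < 2"
  have o: "outv v c \<in> V" using outv_V[OF v c] .
  show ?thesis
  proof (rule V_eqI[OF invv_V[OF o] v])
    show "snd (v ! 0) < 2" using V_snd[OF v, of 0] s1 by simp
    show "lay (invv (outv v c) (snd (v ! 0))) = lay v"
      using lay_invv[OF o] lay_outv[OF v] modr2[OF V_lay[OF v]] by simp
  next
    fix j assume j: "j < s"
    show "snd (invv (outv v c) (snd (v ! 0)) ! j) = snd (v ! j)"
      using invv_nth[OF o j] outv_nth[OF v, of "j - 1" c] j by (cases j) auto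
  qed
qed

lemma outv_invv: "v \<in> V \<Longrightarrow> c < 2 \<Longrightarrow> outv (invv v c) (snd (v!(s-1))) = v"
proof -
  assume v: "v \<in> V" and c: "c < 2"
  have o: "invv v c \<in> V" using invv_V[OF v c] .
  show ?thesis
  proof (rule V_eqI[OF outv_V[OF o] v])
    show "snd (v ! (s-1)) < 2" using V_snd[OF v, of "s-1"] s1 by simp
    show "lay (outv (invv v c) (snd (v ! (s-1)))) = lay v"
      using lay_invv[OF v] lay_outv[OF o] modr1[OF V_lay[OF v]] by simp
  next
    fix j assume j: "j < s"
    show "snd (outv (invv v c) (snd (v ! (s-1))) ! j) = snd (v ! j)"
    proof (cases "Suc j < s")
      case True then show ?thesis using invv_nth[OF v, of "Suc j" c] outv_nth[OF o j] j by auto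
    next
      case False then have "j = s - 1" using j by simp
      then show ?thesis using outv_nth[OF o j] j by auto
    qed
  qed
qed

lemma arc_iff: "PXarc r s v w \<longleftrightarrow> v \<in> V \<and> (\<exists>c<2. w = outv v c)"
proof
  assume a: "PXarc r s v w"
  then have v: "v \<in> V" and w: "w \<in> V" and t: "tl v = butlast w" and l: "PXarc1 r (last v) (last w)"
    by (auto simp: PXarc_def)
  have lv: "last v = v ! (s - 1)" using V_len[OF v] V_ne[OF v] by (simp add: last_conv_nth)
  have flv: "fst (last v) = (lay v + (s - 1)) mod r" using lv V_fst[OF v, of "s-1"] s1 by simp
  have "fst (last w) = (fst (last v) + 1) mod r" using l by (simp add: PXarc1_def)
  also have "\<dots> = (lay v + (s - 1) + 1) mod r" using flv by (simp add: mod_Suc_eq)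
  also have "\<dots> = (lay v + s) mod r" using s1 by simp
  finally have flw: "fst (last w) = (lay v + s) mod r" .
  have lw: "last w = w ! (s - 1)" using V_len[OF w] V_ne[OF w] by (simp add: last_conv_nth)
  have c: "snd (last w) < 2" using lw V_snd[OF w, of "s-1"] s1 by simp
  have "w = butlast w @ [last w]" using V_ne[OF w] by simp
  also have "\<dots> = outv v (snd (last w))" using t flw by (simp add: outv_def prod_eq_iff)
  finally show "v \<in> V \<and> (\<exists>c<2. w = outv v c)" using v c by blast
next
  assume "v \<in> V \<and> (\<exists>c<2. w = outv v c)"
  then obtain c where v: "v \<in> V" and c: "c < 2" and w: "w = outv v c" by blast
  have lv: "last v = v ! (s - 1)" using V_len[OF v] V_ne[OF v] by (simp add: last_conv_nth)
  have flv: "fst (last v) = (lay v + (s - 1)) mod r" using lv V_fst[OF v, of "s-1"] s1 by simp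
  have p1: "last v \<in> PXpt r" using lv V_pt[OF v, of "s-1"] s1 by simp
  have p2: "((lay v + s) mod r, c) \<in> PXpt r" using c r3 by (simp add: PXpt_def)
  have e: "(lay v + s) mod r = (fst (last v) + 1) mod r" using flv s1 by (simp add: mod_Suc_eq)
  show "PXarc r s v w" unfolding PXarc_def using v outv_V[OF v c] w p1 p2 e
    by (auto simp: outv_def PXarc1_def)
qed

lemma arc_in_iff: "PXarc r s w v \<longleftrightarrow> v \<in> V \<and> (\<exists>c<2. w = invv v c)"
proof
  assume "PXarc r s w v"
  then obtain c where w: "w \<in> V" and c: "c < 2" and v: "v = outv w c" by (auto simp: arc_iff)
  have "invv v (snd (w!0)) = w" using invv_outv[OF w c] v by simp
  moreover have "snd (w!0) < 2" using V_snd[OF w, of 0] s1 by simp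
  ultimately show "v \<in> V \<and> (\<exists>c<2. w = invv v c)" using outv_V[OF w c] v by metis
next
  assume "v \<in> V \<and> (\<exists>c<2. w = invv v c)"
  then obtain c where v: "v \<in> V" and c: "c < 2" and w: "w = invv v c" by blast
  have "outv w (snd (v!(s-1))) = v" using outv_invv[OF v c] w by simp
  moreover have "snd (v!(s-1)) < 2" using V_snd[OF v, of "s-1"] s1 by simp
  ultimately show "PXarc r s w v" using invv_V[OF v c] w unfolding arc_iff by metis
qed

lemma arc_V1: "PXarc r s v w \<Longrightarrow> v \<in> V" by (simp add: PXarc_def)
lemma arc_V2: "PXarc r s v w \<Longrightarrow> w \<in> V" by (simp add: PXarc_def)

lemma lay_arc: "PXarc r s v w \<Longrightarrow> lay w = (lay v + 1) mod r"
  using lay_outv by (auto simp: arc_iff)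

lemma no_2cycle: "PXarc r s v w \<Longrightarrow> PXarc r s w v \<Longrightarrow> False"
proof -
  assume a: "PXarc r s v w" and b: "PXarc r s w v"
  have "lay v = ((lay v + 1) mod r + 1) mod r" using lay_arc[OF a] lay_arc[OF b] by simp
  also have "\<dots> = (lay v + 2) mod r" by (simp add: mod_Suc_eq)
  finally have "(lay v + 2) mod r = lay v" by (rule sym)
  then have "2 mod r = 0" using mod_self_shift[OF V_lay[OF arc_V1[OF a]], of 2] by blast
  then show False using r3 by simp
qed

lemma arc_neq: "PXarc r s v w \<Longrightarrow> v \<noteq> w"
proof
  assume a: "PXarc r s v w" and e: "v = w"
  have "(lay v + 1) mod r = lay v" using lay_arc[OF a] e by simp
  then have "1 mod r = 0" using mod_self_shift[OF V_lay[OF arc_V1[OF a]], of 1] by blast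
  then show False using r3 by simp
qed

lemma adj_iff: "PXadj r s a b \<longleftrightarrow> PXarc r s a b \<or> PXarc r s b a"
  using arc_neq unfolding PXadj_def by blast

definition Nb :: "(nat \<times> nat) list \<Rightarrow> (nat \<times> nat) list set" where
  "Nb v = {w. PXadj r s v w}"
definition outs where "outs v = {outv v 0, outv v 1}"
definition ins where "ins v = {invv v 0, invv v 1}"

lemma Nb_eq: "v \<in> V \<Longrightarrow> Nb v = outs v \<union> ins v"
proof -
  assume v: "v \<in> V"
  have "w \<in> Nb v \<longleftrightarrow> w \<in> outs v \<union> ins v" for w
  proof -
    have "w \<in> Nb v \<longleftrightarrow> (\<exists>c<2. w = outv v c) \<or> (\<exists>c<2. w = invv v c)"
      unfolding Nb_def mem_Collect_eq adj_iff arc_iff[of v w] arc_in_iff[of w v] using v by simp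
    also have "\<dots> \<longleftrightarrow> w \<in> outs v \<union> ins v"
      unfolding outs_def ins_def by (auto simp: less_2_cases_iff)
    finally show ?thesis .
  qed
  then show ?thesis by blast
qed

lemma lay_invv': "v \<in> V \<Longrightarrow> lay (invv v c) = (lay v + (r - 1)) mod r"
  using lay_invv[of v c] r3 by simp

lemma outv_inj: "v \<in> V \<Longrightarrow> outv v c = outv v d \<Longrightarrow> c = d"
  by (simp add: outv_def)
lemma invv_inj: "invv v c = invv v d \<Longrightarrow> c = d"
  by (simp add: invv_def)
lemma outv_ne: "v \<in> V \<Longrightarrow> outv v 0 \<noteq> outv v 1" using outv_inj by fastforce
lemma invv_ne: "invv v 0 \<noteq> invv v 1" using invv_inj by fastforce

lemma outv_ne_invv: "v \<in> V \<Longrightarrow> outv v c \<noteq> invv v d"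
proof
  assume v: "v \<in> V" and e: "outv v c = invv v d"
  have "(lay v + 1) mod r = (lay v + (r - 1)) mod r" using e lay_outv[OF v, of c] lay_invv'[OF v, of d] by simp
  then have "1 mod r = (r - 1) mod r" using mod_cancel_nat by blast
  then show False using r3 by simp
qed

lemma outs_ins_disj: "v \<in> V \<Longrightarrow> outs v \<inter> ins v = {}"
  using outv_ne_invv unfolding outs_def ins_def by blast

lemma card_outs: "v \<in> V \<Longrightarrow> card (outs v) = 2" using outv_ne by (simp add: outs_def)
lemma card_ins: "card (ins v) = 2" using invv_ne by (simp add: ins_def)
lemma fin_Nb: "v \<in> V \<Longrightarrow> finite (Nb v)" by (simp add: Nb_eq outs_def ins_def)
lemma card_Nb: "v \<in> V \<Longrightarrow> card (Nb v) = 4"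
  using card_Un_disjoint[of "outs v" "ins v"] card_outs card_ins outs_ins_disj
  by (simp add: Nb_eq outs_def ins_def)

lemma outs_V: "v \<in> V \<Longrightarrow> outs v \<subseteq> V" using outv_V by (simp add: outs_def)
lemma ins_V: "v \<in> V \<Longrightarrow> ins v \<subseteq> V" using invv_V by (simp add: ins_def)
lemma Nb_V: "v \<in> V \<Longrightarrow> Nb v \<subseteq> V" using outs_V ins_V Nb_eq by blast

lemma invv_outv_eq: "v \<in> V \<Longrightarrow> invv (outv v c) b = (lay v, b) # tl v"
  using modr2[OF V_lay] lay_outv[of v c] by (simp add: invv_def outv_def)
lemma ins_outv: "v \<in> V \<Longrightarrow> ins (outv v c) = {(lay v, 0) # tl v, (lay v, 1) # tl v}"
  using invv_outv_eq by (simp add: ins_def)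
lemma outv_invv_eq: "v \<in> V \<Longrightarrow> outv (invv v c) d = butlast v @ [((lay v + (r - 1) + s) mod r, d)]"
  using lay_invv'[of v c] by (simp add: invv_def outv_def mod_add_left_eq)
lemma outs_invv: "v \<in> V \<Longrightarrow> outs (invv v c) = {butlast v @ [((lay v + (r - 1) + s) mod r, 0)], butlast v @ [((lay v + (r - 1) + s) mod r, 1)]}"
  using outv_invv_eq by (simp add: outs_def)

lemma outs_eq_s1: "s = 1 \<Longrightarrow> u \<in> V \<Longrightarrow> w \<in> V \<Longrightarrow> lay u = lay w \<Longrightarrow> outs u = outs w"
proof -
  assume "s = 1" "u \<in> V" "w \<in> V" "lay u = lay w"
  moreover from this have "tl u = []" "tl w = []" using V_len[of u] V_len[of w] by (auto simp: length_Suc_conv)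
  ultimately show ?thesis unfolding outs_def outv_def by simp
qed
lemma ins_eq_s1: "s = 1 \<Longrightarrow> u \<in> V \<Longrightarrow> w \<in> V \<Longrightarrow> lay u = lay w \<Longrightarrow> ins u = ins w"
proof -
  assume "s = 1" "u \<in> V" "w \<in> V" "lay u = lay w"
  moreover from this have "butlast u = []" "butlast w = []" using V_len[of u] V_len[of w] by (auto simp: length_Suc_conv)
  ultimately show ?thesis unfolding ins_def invv_def by simp
qed

definition tq :: nat where "tq = (if s = 1 then 3 else 2)"

lemma card_ins_outs: "w \<in> V \<Longrightarrow> card (ins w \<union> outs w) = 4"
  using card_Nb[of w] Nb_eq[of w] by (simp add: Un_commute)

lemma C1: "v \<in> V \<Longrightarrow> tq \<le> card (Nb (outv v 0) \<inter> Nb (outv v 1))"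
proof -
  assume v: "v \<in> V"
  have u0: "outv v 0 \<in> V" and u1: "outv v 1 \<in> V" using outv_V[OF v] by auto
  have fin: "finite (Nb (outv v 0) \<inter> Nb (outv v 1))" using fin_Nb[OF u0] by simp
  have ii: "ins (outv v 0) = ins (outv v 1)" using ins_outv[OF v] by simp
  show ?thesis
  proof (cases "s = 1")
    case True
    have "outs (outv v 0) = outs (outv v 1)"
      using outs_eq_s1[OF True u0 u1] lay_outv[OF v] by simp
    then have "ins (outv v 0) \<union> outs (outv v 0) \<subseteq> Nb (outv v 0) \<inter> Nb (outv v 1)"
      using ii Nb_eq[OF u0] Nb_eq[OF u1] by blast
    then have "4 \<le> card (Nb (outv v 0) \<inter> Nb (outv v 1))"
      using card_mono[OF fin] card_ins_outs[OF u0] by metis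
    then show ?thesis unfolding tq_def using True by simp
  next
    case False
    have "ins (outv v 0) \<subseteq> Nb (outv v 0) \<inter> Nb (outv v 1)"
      using ii Nb_eq[OF u0] Nb_eq[OF u1] by blast
    then have "2 \<le> card (Nb (outv v 0) \<inter> Nb (outv v 1))"
      using card_mono[OF fin] card_ins by metis
    then show ?thesis unfolding tq_def using False by simp
  qed
qed

lemma C2: "v \<in> V \<Longrightarrow> tq \<le> card (Nb (invv v 0) \<inter> Nb (invv v 1))"
proof -
  assume v: "v \<in> V"
  have u0: "invv v 0 \<in> V" and u1: "invv v 1 \<in> V" using invv_V[OF v] by auto
  have fin: "finite (Nb (invv v 0) \<inter> Nb (invv v 1))" using fin_Nb[OF u0] by simp
  have ii: "outs (invv v 0) = outs (invv v 1)" using outs_invv[OF v] by simp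
  show ?thesis
  proof (cases "s = 1")
    case True
    have "ins (invv v 0) = ins (invv v 1)"
      using ins_eq_s1[OF True u0 u1] lay_invv[OF v] by simp
    then have "ins (invv v 0) \<union> outs (invv v 0) \<subseteq> Nb (invv v 0) \<inter> Nb (invv v 1)"
      using ii Nb_eq[OF u0] Nb_eq[OF u1] by blast
    then have "4 \<le> card (Nb (invv v 0) \<inter> Nb (invv v 1))"
      using card_mono[OF fin] card_ins_outs[OF u0] by metis
    then show ?thesis unfolding tq_def using True by simp
  next
    case False
    have "outs (invv v 0) \<subseteq> Nb (invv v 0) \<inter> Nb (invv v 1)"
      using ii Nb_eq[OF u0] Nb_eq[OF u1] by blast
    then have "2 \<le> card (Nb (invv v 0) \<inter> Nb (invv v 1))"
      using card_mono[OF fin] card_outs[OF u0] by metis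
    then show ?thesis unfolding tq_def using False by simp
  qed
qed

lemma mod2r: "(r - 1 + (r - 1)) mod r = r - 2"
proof -
  have e: "r - 1 + (r - 1) = (r - 2) + r" using r3 by simp
  show ?thesis unfolding e mod_add_self2 using r3 by simp
qed

lemma lay_ne1: "x < r \<Longrightarrow> x \<noteq> (x + 2) mod r"
  using mod_self_shift[of x r 2] r3 by auto
lemma lay_ne2: "x < r \<Longrightarrow> (x + (r - 1) + (r - 1)) mod r \<noteq> x"
  using mod_self_shift[of x r "r - 1 + (r - 1)"] mod2r r3 by (simp add: add.assoc)
lemma lay_ne3: "r \<noteq> 4 \<Longrightarrow> (x + (r - 1) + (r - 1)) mod r \<noteq> (x + 2) mod r"
  using mod_cancel_nat[of x "r - 1 + (r - 1)" r 2] mod2r r3 by (simp add: add.assoc)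

lemma C3: "r \<noteq> 4 \<Longrightarrow> v \<in> V \<Longrightarrow> y \<in> ins v \<Longrightarrow> u \<in> outs v \<Longrightarrow> card (Nb y \<inter> Nb u) < tq"
proof -
  assume r4: "r \<noteq> 4" and v: "v \<in> V" and yi: "y \<in> ins v" and uo: "u \<in> outs v"
  have "\<exists>c<2. y = invv v c" using yi unfolding ins_def by force
  then obtain c where c: "c < 2" "y = invv v c" by blast
  have "\<exists>c<2. u = outv v c" using uo unfolding outs_def by force
  then obtain c' where c': "c' < 2" "u = outv v c'" by blast
  have y: "y \<in> V" using invv_V[OF v] c by simp
  have u: "u \<in> V" using outv_V[OF v] c' by simp
  define x where "x = lay v"
  have x: "x < r" using V_lay[OF v] x_def by simp
  have ly: "lay y = (x + (r - 1)) mod r" using lay_invv'[OF v] c x_def by simp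
  have lu: "lay u = (x + 1) mod r" using lay_outv[OF v] c' x_def by simp
  have sub: "Nb y \<inter> Nb u \<subseteq> (if s = 1 then {[(x,0)], [(x,1)]} else {v})"
  proof
    fix z assume z: "z \<in> Nb y \<inter> Nb u"
    have zy: "z \<in> outs y \<or> z \<in> ins y" and zu: "z \<in> outs u \<or> z \<in> ins u"
      using z Nb_eq[OF y] Nb_eq[OF u] by auto
    have loy: "z \<in> outs y \<Longrightarrow> lay z = x"
    proof -
      assume "z \<in> outs y"
      then obtain d where "z = outv y d" unfolding outs_def by blast
      then have "lay z = ((x + (r - 1)) mod r + 1) mod r" using lay_outv[OF y] ly by simp
      also have "\<dots> = (x + r) mod r" using r3 by (simp add: mod_Suc_eq)
      finally show ?thesis using x by simp
    qed
    have liy: "z \<in> ins y \<Longrightarrow> lay z = (x + (r - 1) + (r - 1)) mod r"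
    proof -
      assume "z \<in> ins y"
      then obtain d where "z = invv y d" unfolding ins_def by blast
      then show ?thesis using lay_invv'[OF y] ly by (simp add: mod_add_left_eq)
    qed
    have lou: "z \<in> outs u \<Longrightarrow> lay z = (x + 2) mod r"
    proof -
      assume "z \<in> outs u"
      then obtain d where "z = outv u d" unfolding outs_def by blast
      then show ?thesis using lay_outv[OF u] lu by (simp add: mod_Suc_eq)
    qed
    have liu: "z \<in> ins u \<Longrightarrow> lay z = x"
    proof -
      assume "z \<in> ins u"
      then obtain d where "z = invv u d" unfolding ins_def by blast
      then show ?thesis using lay_invv[OF u] lu modr2[OF x] by simp
    qed
    have zz: "z \<in> outs y \<and> z \<in> ins u"
      using zy zu loy liy lou liu lay_ne1[OF x] lay_ne2[OF x] lay_ne3[OF r4, of x] by metis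
    have "\<exists>d<2. z = outv y d" "\<exists>e<2. z = invv u e" using zz unfolding outs_def ins_def by force+
    then obtain d e where d: "d < 2" "z = outv y d" and e: "e < 2" "z = invv u e" by blast
    have z1: "z = butlast v @ [((x + (r - 1) + s) mod r, d)]"
      using d outv_invv_eq[OF v] c x_def by simp
    have z2: "z = (x, e) # tl v" using e invv_outv_eq[OF v] c' x_def by simp
    show "z \<in> (if s = 1 then {[(x,0)], [(x,1)]} else {v})"
    proof (cases "s = 1")
      case True
      then have "tl v = []" using V_len[OF v] by (cases v) auto
      then show ?thesis using z2 e True by (auto simp: less_2_cases_iff)
    next
      case False
      have lv: "length v = s" using V_len[OF v] .
      have "z = v"
      proof (rule nth_equalityI)
        show "length z = length v" using z2 lv V_ne[OF v] s1 by simp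
      next
        fix j assume "j < length z"
        then have j: "j < s" using z2 lv V_ne[OF v] s1 by simp
        show "z ! j = v ! j"
        proof (cases j)
          case 0 then show ?thesis using z1 False lv s1 by (simp add: nth_append nth_butlast)
        next
          case (Suc i) then show ?thesis using z2 lv j by (simp add: nth_tl)
        qed
      qed
      then show ?thesis using False by simp
    qed
  qed
  show ?thesis
  proof (cases "s = 1")
    case True
    then have "card (Nb y \<inter> Nb u) \<le> card {[(x,0)], [(x,1::nat)]}"
      using sub by (intro card_mono) auto
    also have "\<dots> \<le> 2" by (simp add: card_insert_le_m1)
    finally show ?thesis unfolding tq_def using True by simp
  next
    case False
    then have "card (Nb y \<inter> Nb u) \<le> card {v}" using sub by (intro card_mono) auto
    then show ?thesis unfolding tq_def using False by simp
  qed
qed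

end


context px begin

lemma reach_s: "k \<le> s \<Longrightarrow> v \<in> V \<Longrightarrow> w \<in> V \<Longrightarrow> lay w = (lay v + s) mod r \<Longrightarrow>
   drop k v @ take k w \<in> V \<and> (PXarc r s)\<^sup>*\<^sup>* v (drop k v @ take k w)"
proof (induction k)
  case 0 then show ?case by simp
next
  case (Suc k)
  let ?h = "drop k v @ take k w"
  have hV: "?h \<in> V" and hr: "(PXarc r s)\<^sup>*\<^sup>* v ?h" using Suc by auto
  have k: "k < s" using Suc by simp
  have lv: "length v = s" "length w = s" using V_len Suc by auto
  have lh: "lay ?h = (lay v + k) mod r" using V_fst[OF \<open>v \<in> V\<close> k] k lv
    by (simp add: lay_def nth_append)
  have wk: "w ! k = ((lay w + k) mod r, snd (w!k))" using V_nth[OF \<open>w \<in> V\<close> k] .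
  have "(lay ?h + s) mod r = (lay v + k + s) mod r" using lh by (simp add: mod_add_left_eq)
  also have "\<dots> = (lay v + s + k) mod r" by (simp add: ac_simps)
  also have "\<dots> = (lay w + k) mod r" using Suc.prems(4) by (simp add: mod_add_left_eq)
  finally have e: "(lay ?h + s) mod r = (lay w + k) mod r" .
  have tlh: "tl ?h = drop (Suc k) v @ take k w" using k lv by (simp add: drop_Suc tl_drop)
  have o: "outv ?h (snd (w!k)) = drop (Suc k) v @ take (Suc k) w"
    unfolding outv_def tlh using e wk k lv by (simp add: take_Suc_conv_app_nth)
  have c: "snd (w!k) < 2" using V_snd[OF \<open>w \<in> V\<close> k] .
  have a: "PXarc r s ?h (outv ?h (snd (w!k)))" using hV c by (auto simp: arc_iff)
  show ?case using outv_V[OF hV c] a hr o by (metis rtranclp.rtrancl_into_rtrancl)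
qed

lemma reach_layer: "v \<in> V \<Longrightarrow> \<exists>u\<in>V. (PXarc r s)\<^sup>*\<^sup>* v u \<and> lay u = (lay v + m) mod r"
proof (induction m)
  case 0 then show ?case using V_lay by auto
next
  case (Suc m)
  then obtain u where u: "u \<in> V" "(PXarc r s)\<^sup>*\<^sup>* v u" "lay u = (lay v + m) mod r" by blast
  have a: "PXarc r s u (outv u 0)" unfolding arc_iff using u(1) by (intro conjI exI[where x=0]) auto
  have "lay (outv u 0) = (lay v + Suc m) mod r" using lay_outv[OF u(1)] u(3) by (simp add: mod_Suc_eq)
  then show ?case using outv_V[OF u(1)] a u(2) by (metis rtranclp.rtrancl_into_rtrancl zero_less_numeral)
qed

lemma reach: "v \<in> V \<Longrightarrow> w \<in> V \<Longrightarrow> (PXarc r s)\<^sup>*\<^sup>* v w"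
proof -
  assume v: "v \<in> V" and w: "w \<in> V"
  define a where "a = lay v + s"
  define m where "m = r - a mod r + lay w"
  have lt: "a mod r < r" using r3 by simp
  have am: "a + m = a div r * r + r + lay w"
    using div_mult_mod_eq[of a r] lt unfolding m_def by linarith
  obtain u where u: "u \<in> V" "(PXarc r s)\<^sup>*\<^sup>* v u" "lay u = (lay v + m) mod r"
    using reach_layer[OF v] by blast
  have "(lay u + s) mod r = (lay v + m + s) mod r" using u(3) by (simp add: mod_add_left_eq)
  also have "\<dots> = (a + m) mod r" unfolding a_def by (simp add: ac_simps)
  finally have "(lay u + s) mod r = (a + m) mod r" .
  also have "\<dots> = lay w"
  proof -
    have "a + m = lay w + (a div r + 1) * r" unfolding am by (simp add: algebra_simps)
    then show ?thesis using V_lay[OF w] by (simp only: mod_mult_self1) simp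
  qed
  finally have l: "lay w = (lay u + s) mod r" by simp
  have "drop s u @ take s w = w" using V_len[OF u(1)] V_len[OF w] by simp
  then have "(PXarc r s)\<^sup>*\<^sup>* u w" using reach_s[OF _ u(1) w l, of s] by simp
  then show ?thesis using u(2) by simp
qed

lemma const_on_V: "(\<And>a b. PXarc r s a b \<Longrightarrow> P a = P b) \<Longrightarrow> v \<in> V \<Longrightarrow> w \<in> V \<Longrightarrow> P v = P w"
proof -
  assume h: "\<And>a b. PXarc r s a b \<Longrightarrow> P a = P b" and v: "v \<in> V" and w: "w \<in> V"
  have "(PXarc r s)\<^sup>*\<^sup>* v w" using reach[OF v w] .
  then show ?thesis by (induction rule: rtranclp_induct) (auto dest: h)
qed

end


locale pxg = px +
  fixes g :: "(nat \<times> nat) list \<Rightarrow> (nat \<times> nat) list"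
  assumes aut: "is_graph_aut (PXV r s) (PXadj r s) g"
begin

lemma g_bij: "bij_betw g V V" using aut by (simp add: is_graph_aut_def)
lemma gV: "v \<in> V \<Longrightarrow> g v \<in> V" using g_bij bij_betwE by blast
lemma g_inj: "inj_on g V" using g_bij by (simp add: bij_betw_def)
lemma g_img: "g ` V = V" using g_bij by (simp add: bij_betw_def)
lemma g_adj: "a \<in> V \<Longrightarrow> b \<in> V \<Longrightarrow> PXadj r s (g a) (g b) \<longleftrightarrow> PXadj r s a b"
  using aut by (simp add: is_graph_aut_def)
lemma g_eq: "a \<in> V \<Longrightarrow> b \<in> V \<Longrightarrow> g a = g b \<longleftrightarrow> a = b"
  using g_inj by (auto simp: inj_on_def)

lemma adj_V: "PXadj r s a b \<Longrightarrow> a \<in> V \<and> b \<in> V"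
  by (auto simp: adj_iff dest: arc_V1 arc_V2)

lemma Nb_g: "v \<in> V \<Longrightarrow> Nb (g v) = g ` Nb v"
proof
  assume v: "v \<in> V"
  show "g ` Nb v \<subseteq> Nb (g v)"
  proof
    fix z assume "z \<in> g ` Nb v"
    then obtain w where w: "w \<in> Nb v" "z = g w" by blast
    then have "PXadj r s v w" by (simp add: Nb_def)
    then show "z \<in> Nb (g v)" using w adj_V g_adj by (simp add: Nb_def)
  qed
  show "Nb (g v) \<subseteq> g ` Nb v"
  proof
    fix z assume z: "z \<in> Nb (g v)"
    then have "z \<in> V" using adj_V by (simp add: Nb_def)
    then obtain w where w: "w \<in> V" "z = g w" using g_img by blast
    then have "PXadj r s v w" using z g_adj v by (simp add: Nb_def)
    then show "z \<in> g ` Nb v" using w by (simp add: Nb_def)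
  qed
qed

lemma card_common_g: "a \<in> V \<Longrightarrow> b \<in> V \<Longrightarrow> card (Nb (g a) \<inter> Nb (g b)) = card (Nb a \<inter> Nb b)"
proof -
  assume a: "a \<in> V" and b: "b \<in> V"
  have "Nb (g a) \<inter> Nb (g b) = g ` (Nb a \<inter> Nb b)"
    using Nb_g[OF a] Nb_g[OF b] inj_on_image_Int[OF g_inj Nb_V[OF a] Nb_V[OF b]] by simp
  moreover have "inj_on g (Nb a \<inter> Nb b)" using g_inj Nb_V[OF a] by (meson inj_on_subset le_infI1)
  ultimately show ?thesis by (simp add: card_image)
qed

definition Q where "Q p q \<longleftrightarrow> tq \<le> card (Nb p \<inter> Nb q)"

lemma Qpart: "r \<noteq> 4 \<Longrightarrow> v \<in> V \<Longrightarrow> p \<in> Nb v \<Longrightarrow> q \<in> Nb v \<Longrightarrow> p \<noteq> q \<Longrightarrow>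
  Q p q \<longleftrightarrow> (p \<in> outs v \<and> q \<in> outs v) \<or> (p \<in> ins v \<and> q \<in> ins v)"
proof -
  assume r4: "r \<noteq> 4" and v: "v \<in> V" and p: "p \<in> Nb v" and q: "q \<in> Nb v" and pq: "p \<noteq> q"
  have pc: "p \<in> outs v \<or> p \<in> ins v" and qc: "q \<in> outs v \<or> q \<in> ins v" using p q Nb_eq[OF v] by auto
  have oo: "p \<in> outs v \<Longrightarrow> q \<in> outs v \<Longrightarrow> Q p q"
  proof -
    assume "p \<in> outs v" "q \<in> outs v"
    then have "(p = outv v 0 \<and> q = outv v 1) \<or> (p = outv v 1 \<and> q = outv v 0)" using pq by (auto simp: outs_def)
    then show "Q p q" using C1[OF v] by (auto simp: Q_def Int_commute)
  qed
  have ii: "p \<in> ins v \<Longrightarrow> q \<in> ins v \<Longrightarrow> Q p q"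
  proof -
    assume "p \<in> ins v" "q \<in> ins v"
    then have "(p = invv v 0 \<and> q = invv v 1) \<or> (p = invv v 1 \<and> q = invv v 0)" using pq by (auto simp: ins_def)
    then show "Q p q" using C2[OF v] by (auto simp: Q_def Int_commute)
  qed
  have io: "p \<in> ins v \<Longrightarrow> q \<in> outs v \<Longrightarrow> \<not> Q p q" unfolding Q_def using C3[OF r4 v, of p q] by simp
  have oi: "p \<in> outs v \<Longrightarrow> q \<in> ins v \<Longrightarrow> \<not> Q p q" unfolding Q_def using C3[OF r4 v, of q p] by (simp add: Int_commute)
  show ?thesis using pc qc oo ii io oi outs_ins_disj[OF v] by blast
qed

lemma Q_g: "a \<in> V \<Longrightarrow> b \<in> V \<Longrightarrow> Q (g a) (g b) \<longleftrightarrow> Q a b"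
  using card_common_g by (simp add: Q_def)

lemma out_image: "r \<noteq> 4 \<Longrightarrow> v \<in> V \<Longrightarrow> g ` outs v = outs (g v) \<or> g ` outs v = ins (g v)"
proof -
  assume r4: "r \<noteq> 4" and v: "v \<in> V"
  have o0: "outv v 0 \<in> V" and o1: "outv v 1 \<in> V" using outv_V[OF v] by auto
  have n0: "g (outv v 0) \<in> Nb (g v)" and n1: "g (outv v 1) \<in> Nb (g v)"
    using Nb_g[OF v] Nb_eq[OF v] by (auto simp: outs_def)
  have ne: "g (outv v 0) \<noteq> g (outv v 1)" using g_eq[OF o0 o1] outv_ne[OF v] by simp
  have "Q (outv v 0) (outv v 1)"
    using Qpart[OF r4 v, of "outv v 0" "outv v 1"] outv_ne[OF v] Nb_eq[OF v] by (auto simp: outs_def)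
  then have "Q (g (outv v 0)) (g (outv v 1))" using Q_g[OF o0 o1] by simp
  then have cases: "(g (outv v 0) \<in> outs (g v) \<and> g (outv v 1) \<in> outs (g v)) \<or>
     (g (outv v 0) \<in> ins (g v) \<and> g (outv v 1) \<in> ins (g v))"
    using Qpart[OF r4 gV[OF v] n0 n1 ne] by simp
  have im: "g ` outs v = {g (outv v 0), g (outv v 1)}" by (simp add: outs_def)
  have c2: "card (g ` outs v) = 2" using im ne by simp
  show ?thesis
  proof (cases "g (outv v 0) \<in> outs (g v) \<and> g (outv v 1) \<in> outs (g v)")
    case True
    then have "g ` outs v \<subseteq> outs (g v)" using im by simp
    then have "g ` outs v = outs (g v)" using card_subset_eq[of "outs (g v)"] c2 card_outs[OF gV[OF v]]
      by (simp add: outs_def)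
    then show ?thesis by simp
  next
    case False
    then have "g ` outs v \<subseteq> ins (g v)" using cases unfolding im by blast
    then have "g ` outs v = ins (g v)" using card_subset_eq[of "ins (g v)"] c2 card_ins
      by (simp add: ins_def)
    then show ?thesis by simp
  qed
qed

definition pres where "pres v \<longleftrightarrow> g ` outs v = outs (g v)"

lemma g_Nb_split: "v \<in> V \<Longrightarrow> g ` outs v \<union> g ` ins v = outs (g v) \<union> ins (g v)"
proof -
  assume v: "v \<in> V"
  show ?thesis using Nb_g[OF v] Nb_eq[OF v] Nb_eq[OF gV[OF v]] by (simp add: image_Un)
qed

lemma g_disj: "v \<in> V \<Longrightarrow> g ` outs v \<inter> g ` ins v = {}"
proof -
  assume v: "v \<in> V"
  show ?thesis using inj_on_image_Int[OF g_inj outs_V[OF v] ins_V[OF v]] outs_ins_disj[OF v] by simp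
qed

lemma set4: "A \<union> B = C \<union> D \<Longrightarrow> A \<inter> B = {} \<Longrightarrow> C \<inter> D = {} \<Longrightarrow> A = C \<Longrightarrow> B = D" by blast
lemma set4': "A \<union> B = C \<union> D \<Longrightarrow> A \<inter> B = {} \<Longrightarrow> C \<inter> D = {} \<Longrightarrow> A = D \<Longrightarrow> B = C" by blast

lemma pres_ins: "r \<noteq> 4 \<Longrightarrow> v \<in> V \<Longrightarrow> pres v \<Longrightarrow> g ` ins v = ins (g v)"
proof -
  assume v: "v \<in> V" and p: "pres v"
  show ?thesis by (rule set4[OF g_Nb_split[OF v] g_disj[OF v] outs_ins_disj[OF gV[OF v]]]) (use p in \<open>simp add: pres_def\<close>)
qed

lemma npres: "r \<noteq> 4 \<Longrightarrow> v \<in> V \<Longrightarrow> \<not> pres v \<Longrightarrow> g ` outs v = ins (g v) \<and> g ` ins v = outs (g v)"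
proof -
  assume r4: "r \<noteq> 4" and v: "v \<in> V" and np: "\<not> pres v"
  then have o: "g ` outs v = ins (g v)" using out_image[OF r4 v] by (simp add: pres_def)
  then show ?thesis using set4'[OF g_Nb_split[OF v] g_disj[OF v] outs_ins_disj[OF gV[OF v]]] by simp
qed

lemma out_mem: "v \<in> V \<Longrightarrow> u \<in> outs v \<longleftrightarrow> PXarc r s v u"
  unfolding arc_iff outs_def by (auto simp: less_2_cases_iff)
lemma in_mem: "v \<in> V \<Longrightarrow> u \<in> ins v \<longleftrightarrow> PXarc r s u v"
  unfolding arc_in_iff ins_def by (auto simp: less_2_cases_iff)

lemma pres_arc: "r \<noteq> 4 \<Longrightarrow> PXarc r s v u \<Longrightarrow> pres v = pres u"
proof -
  assume r4: "r \<noteq> 4" and a: "PXarc r s v u"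
  have v: "v \<in> V" and u: "u \<in> V" using arc_V1[OF a] arc_V2[OF a] .
  have uo: "u \<in> outs v" using out_mem[OF v] a by simp
  have vi: "v \<in> ins u" using in_mem[OF u] a by simp
  show ?thesis
  proof
    assume pv: "pres v"
    then have "g u \<in> outs (g v)" using uo by (auto simp: pres_def)
    then have a1: "PXarc r s (g v) (g u)" using out_mem[OF gV[OF v]] by simp
    show "pres u"
    proof (rule ccontr)
      assume "\<not> pres u"
      then have "g v \<in> outs (g u)" using npres[OF r4 u] vi by blast
      then have "PXarc r s (g u) (g v)" using out_mem[OF gV[OF u]] by simp
      then show False using no_2cycle a1 by blast
    qed
  next
    assume pu: "pres u"
    show "pres v"
    proof (rule ccontr)
      assume "\<not> pres v"
      then have "g u \<in> ins (g v)" using npres[OF r4 v] uo by blast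
      then have a1: "PXarc r s (g u) (g v)" using in_mem[OF gV[OF v]] by simp
      have "g v \<in> ins (g u)" using pres_ins[OF r4 u pu] vi by blast
      then have "PXarc r s (g v) (g u)" using in_mem[OF gV[OF u]] by simp
      then show False using no_2cycle a1 by blast
    qed
  qed
qed

end


context px begin

definition mk :: "nat \<Rightarrow> nat list \<Rightarrow> (nat \<times> nat) list" where
  "mk y bs = map (\<lambda>j. ((y + j) mod r, bs ! j)) [0..<s]"

definition BL :: "nat list set" where "BL = {bs. set bs \<subseteq> {0,1} \<and> length bs = s}"

definition Lay :: "nat \<Rightarrow> (nat \<times> nat) list set" where "Lay y = {a \<in> V. lay a = y}"

lemma card_BL: "card BL = 2 ^ s"
  unfolding BL_def using card_lists_length_eq[of "{0::nat,1}" s] by (simp add: numeral_2_eq_2)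

lemma fin_BL: "finite BL"
  using card_BL card_eq_0_iff by (metis power_not_zero zero_neq_numeral)

lemma mk_V: "y < r \<Longrightarrow> bs \<in> BL \<Longrightarrow> mk y bs \<in> V \<and> lay (mk y bs) = y"
proof -
  assume y: "y < r" and bs: "bs \<in> BL"
  have l: "lay (mk y bs) = y" using s1 y by (simp add: mk_def lay_def)
  have "mk y bs \<in> V" unfolding V_iff
  proof (intro conjI allI impI)
    show "length (mk y bs) = s" by (simp add: mk_def)
    show "lay (mk y bs) < r" using l y by simp
  next
    fix j assume j: "j < s"
    show "fst (mk y bs ! j) = (lay (mk y bs) + j) mod r" using l j by (simp add: mk_def)
    have "bs ! j \<in> set bs" using bs j unfolding BL_def by simp
    then have "bs ! j \<in> {0,1}" using bs unfolding BL_def by blast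
    then show "snd (mk y bs ! j) < 2" using j by (auto simp: mk_def)
  qed
  then show ?thesis using l by simp
qed

lemma Lay_eq: "y < r \<Longrightarrow> Lay y = mk y ` BL"
proof
  assume y: "y < r"
  show "mk y ` BL \<subseteq> Lay y" using mk_V[OF y] by (auto simp: Lay_def)
  show "Lay y \<subseteq> mk y ` BL"
  proof
    fix a assume "a \<in> Lay y"
    then have a: "a \<in> V" and la: "lay a = y" by (auto simp: Lay_def)
    have "map snd a \<in> BL" unfolding BL_def
    proof (intro CollectI conjI)
      show "length (map snd a) = s" using V_len[OF a] by simp
      show "set (map snd a) \<subseteq> {0,1}"
      proof
        fix b assume "b \<in> set (map snd a)"
        then obtain j where "j < s" "b = snd (a!j)" using V_len[OF a] by (auto simp: in_set_conv_nth)
        then show "b \<in> {0,1}" using V_snd[OF a] by fastforce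
      qed
    qed
    moreover have "a = mk y (map snd a)"
    proof (rule nth_equalityI)
      show "length a = length (mk y (map snd a))" using V_len[OF a] by (simp add: mk_def)
      fix j assume "j < length a"
      then have j: "j < s" using V_len[OF a] by simp
      show "a ! j = mk y (map snd a) ! j"
        using V_nth[OF a j] la j V_len[OF a] by (simp add: mk_def)
    qed
    ultimately show "a \<in> mk y ` BL" by blast
  qed
qed

lemma mk_inj: "inj_on (mk y) BL"
proof (rule inj_onI)
  fix a b assume "a \<in> BL" "b \<in> BL" "mk y a = mk y b"
  then have "map snd (mk y a) = map snd (mk y b)" by simp
  moreover have "map snd (mk y bs) = bs" if "bs \<in> BL" for bs
    using that by (auto simp: mk_def BL_def intro: nth_equalityI)
  ultimately show "a = b" using \<open>a \<in> BL\<close> \<open>b \<in> BL\<close> by simp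
qed

lemma card_Lay: "y < r \<Longrightarrow> card (Lay y) = 2 ^ s"
  using Lay_eq card_image[OF mk_inj] card_BL by simp

lemma fin_Lay: "y < r \<Longrightarrow> finite (Lay y)"
  using Lay_eq fin_BL by simp

lemma card_layers: "G \<subseteq> {..<r} \<Longrightarrow> card {a \<in> V. lay a \<in> G} = card G * 2 ^ s"
proof -
  assume G: "G \<subseteq> {..<r}"
  have fG: "finite G" using G finite_subset by blast
  have eq: "{a \<in> V. lay a \<in> G} = (\<Union>y\<in>G. Lay y)" by (auto simp: Lay_def)
  have "card (\<Union>y\<in>G. Lay y) = (\<Sum>y\<in>G. card (Lay y))"
    using fG G fin_Lay by (intro card_UN_disjoint) (auto simp: Lay_def)
  also have "\<dots> = (\<Sum>y\<in>G. 2 ^ s)" using G card_Lay by (intro sum.cong) auto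
  finally show ?thesis using eq by simp
qed

lemma V_layers: "V = {a \<in> V. lay a \<in> {..<r}}" using V_lay by auto

lemma card_V: "card V = r * 2 ^ s"
  using card_layers[of "{..<r}"] V_layers by simp

lemma fin_V: "finite V"
  using card_V r3 card_eq_0_iff by fastforce

lemma edge_param: "PXE r s = (\<lambda>(a,c). {a, outv a c}) ` (V \<times> {0,1})"
proof
  show "PXE r s \<subseteq> (\<lambda>(a,c). {a, outv a c}) ` (V \<times> {0,1})"
  proof
    fix e assume "e \<in> PXE r s"
    then obtain a b where e: "e = {a,b}" and ab: "PXarc r s a b \<or> PXarc r s b a"
      by (auto simp: PXE_def adj_iff)
    from ab show "e \<in> (\<lambda>(a,c). {a, outv a c}) ` (V \<times> {0,1})"
    proof
      assume "PXarc r s a b"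
      then obtain c where c: "a \<in> V" "c < 2" "b = outv a c" unfolding arc_iff by blast
      then have "(a,c) \<in> V \<times> {0,1}" by auto
      then show ?thesis using e c by (intro rev_image_eqI[of "(a,c)"]) auto
    next
      assume "PXarc r s b a"
      then obtain c where c: "b \<in> V" "c < 2" "a = outv b c" unfolding arc_iff by blast
      then have "(b,c) \<in> V \<times> {0,1}" by auto
      then show ?thesis using e c by (intro rev_image_eqI[of "(b,c)"]) auto
    qed
  qed
  show "(\<lambda>(a,c). {a, outv a c}) ` (V \<times> {0,1}) \<subseteq> PXE r s"
  proof
    fix e assume "e \<in> (\<lambda>(a,c). {a, outv a c}) ` (V \<times> {0,1})"
    then obtain a c where "a \<in> V" "c \<in> {0,1}" "e = {a, outv a c}" by auto
    then have "PXarc r s a (outv a c)" unfolding arc_iff by (intro conjI exI[where x=c]) auto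
    then have "PXadj r s a (outv a c)" by (simp add: adj_iff)
    then show "e \<in> PXE r s" unfolding PXE_def using \<open>e = {a, outv a c}\<close> by blast
  qed
qed

lemma edge_inj: "inj_on (\<lambda>(a,c). {a, outv a c}) (V \<times> {0,1})"
proof (rule inj_onI)
  fix x y assume x: "x \<in> V \<times> {0::nat,1}" and y: "y \<in> V \<times> {0::nat,1}"
    and e: "(\<lambda>(a,c). {a, outv a c}) x = (\<lambda>(a,c). {a, outv a c}) y"
  obtain a c where xa: "x = (a,c)" by (cases x)
  obtain b d where yb: "y = (b,d)" by (cases y)
  have a: "a \<in> V" "c < 2" and b: "b \<in> V" "d < 2" using x y xa yb by auto
  have arc1: "PXarc r s a (outv a c)" and arc2: "PXarc r s b (outv b d)" using a b by (auto simp: arc_iff)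
  have "{a, outv a c} = {b, outv b d}" using e xa yb by simp
  then have "(a = b \<and> outv a c = outv b d) \<or> (a = outv b d \<and> outv a c = b)" by (auto simp: doubleton_eq_iff)
  then show "x = y"
  proof
    assume "a = b \<and> outv a c = outv b d"
    then show ?thesis using outv_inj[OF a(1)] xa yb by auto
  next
    assume h: "a = outv b d \<and> outv a c = b"
    then have h1: "outv a c = b" and h2: "outv b d = a" by auto
    have "PXarc r s a b" using arc1 unfolding h1 .
    moreover have "PXarc r s b a" using arc2 unfolding h2 .
    ultimately show ?thesis using no_2cycle by blast
  qed
qed

lemma card_E: "card (PXE r s) = 2 * card V"
  using edge_param card_image[OF edge_inj] card_cartesian_product[of V "{0::nat,1}"] by simp

lemma fin_E: "finite (PXE r s)" using edge_param fin_V by simp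

lemma card_G: "i < r \<Longrightarrow> card {y. y < r \<and> (\<forall>j\<le>s. (y + j) mod r \<noteq> i)} = r - Suc s"
proof -
  assume i: "i < r"
  define ex where "ex = (\<lambda>j. (i + (r - j)) mod r) ` {..s}"
  have inj: "inj_on (\<lambda>j. (i + (r - j)) mod r) {..s}"
  proof (rule inj_onI)
    fix a b assume a: "a \<in> {..s}" and b: "b \<in> {..s}" and e: "(i + (r - a)) mod r = (i + (r - b)) mod r"
    show "a = b"
    proof (rule ccontr)
      assume ne: "a \<noteq> b"
      { fix a b :: nat assume ab: "a < b" "b \<le> s" "(i + (r - a)) mod r = (i + (r - b)) mod r"
        have "i + (r - a) = (i + (r - b)) + (b - a)" using ab sr by simp
        then have "((i + (r - b)) + (b - a)) mod r = ((i + (r - b)) + 0) mod r" using ab by simp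
        then have "(b - a) mod r = 0" using mod_cancel_nat[of "i + (r - b)" "b - a" r 0] by simp
        then have False using ab sr by simp }
      then show False using ne a b e by (metis atMost_iff linorder_neqE_nat)
    qed
  qed
  have cex: "card ex = Suc s" unfolding ex_def using card_image[OF inj] by simp
  have exs: "ex \<subseteq> {..<r}" unfolding ex_def using r3 by auto
  have eq: "{y. y < r \<and> (\<forall>j\<le>s. (y + j) mod r \<noteq> i)} = {..<r} - ex"
  proof -
    have "(y + j) mod r = i \<longleftrightarrow> y = (i + (r - j)) mod r" if "y < r" "j \<le> s" for y j
    proof
      assume h: "(y + j) mod r = i"
      have "(i + (r - j)) mod r = ((y + j) mod r + (r - j)) mod r" using h by simp
      also have "\<dots> = (y + j + (r - j)) mod r" by (simp add: mod_add_left_eq)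
      also have "y + j + (r - j) = y + r" using that sr by simp
      finally show "y = (i + (r - j)) mod r" using that by simp
    next
      assume h: "y = (i + (r - j)) mod r"
      have "(y + j) mod r = (i + (r - j) + j) mod r" using h by (simp add: mod_add_left_eq)
      also have "i + (r - j) + j = i + r" using that sr by simp
      finally show "(y + j) mod r = i" using i by simp
    qed
    then show ?thesis unfolding ex_def by auto
  qed
  have fex: "finite ex" unfolding ex_def by simp
  have "card ({..<r} - ex) = r - Suc s" using card_Diff_subset[OF fex exs] cex by simp
  then show ?thesis using eq by simp
qed

lemma card_Y: "card {y. y < r \<and> (2 * y + 1) mod r = e} \<le> 2"
proof (cases "{y. y < r \<and> (2 * y + 1) mod r = e} = {}")
  case True then show ?thesis by (subst True) simp
next
  case False
  define Y where "Y = {y. y < r \<and> (2 * y + 1) mod r = e}"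
  have fY: "finite Y" unfolding Y_def by simp
  define m where "m = Min Y"
  have "Y \<noteq> {}" using False unfolding Y_def .
  then have mY: "m \<in> Y" using Min_in[OF fY] unfolding m_def by blast
  have sub: "Y \<subseteq> {m, m + r div 2}"
  proof
    fix y assume yY: "y \<in> Y"
    have my: "m \<le> y" using fY yY unfolding m_def by simp
    show "y \<in> {m, m + r div 2}"
    proof (cases "y = m")
      case True then show ?thesis by simp
    next
      case False
      then have lt: "m < y" using my by simp
      have ey: "(2 * y + 1) mod r = e" using yY unfolding Y_def by blast
      have em: "(2 * m + 1) mod r = e" using mY unfolding Y_def by blast
      have "2 * y + 1 = 2 * m + 1 + 2 * (y - m)" using lt by simp
      then have "(2 * m + 1 + 2 * (y - m)) mod r = (2 * m + 1 + 0) mod r"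
        using ey em by (metis add_0_right)
      then have d: "(2 * (y - m)) mod r = 0" using mod_cancel_nat[of "2 * m + 1" "2 * (y - m)" r 0] by simp
      have yr: "y < r" using yY unfolding Y_def by simp
      have "2 * (y - m) = r"
      proof -
        obtain q where q: "2 * (y - m) = r * q" using d by (auto simp: mod_eq_0_iff_dvd dvd_def)
        have "0 < q" using q lt by (cases q) auto
        moreover have "r * q < r * 2" using q yr lt by linarith
        then have "q < 2" by simp
        ultimately have "q = 1" by simp
        then show ?thesis using q by simp
      qed
      then have "y = m + r div 2" using lt by simp
      then show ?thesis by simp
    qed
  qed
  have "card Y \<le> card {m, m + r div 2}" using sub by (intro card_mono) auto
  also have "\<dots> \<le> 2" by (simp add: card_insert_le_m1)
  finally show ?thesis unfolding Y_def .
qed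

end


context pxg begin

lemma pres_const: "r \<noteq> 4 \<Longrightarrow> v \<in> V \<Longrightarrow> w \<in> V \<Longrightarrow> pres v = pres w"
  using const_on_V[of pres v w] pres_arc by blast

lemma arc_pres: "r \<noteq> 4 \<Longrightarrow> v \<in> V \<Longrightarrow> pres v \<Longrightarrow> PXarc r s a b \<Longrightarrow> PXarc r s (g a) (g b)"
proof -
  assume r4: "r \<noteq> 4" and v: "v \<in> V" and p: "pres v" and ab: "PXarc r s a b"
  have a: "a \<in> V" using arc_V1[OF ab] .
  have pa: "pres a" using pres_const[OF r4 v a] p by simp
  have "b \<in> outs a" using out_mem[OF a] ab by simp
  then have "g b \<in> outs (g a)" using pa by (auto simp: pres_def)
  then show ?thesis using out_mem[OF gV[OF a]] by simp
qed

lemma arc_rev: "r \<noteq> 4 \<Longrightarrow> v \<in> V \<Longrightarrow> \<not> pres v \<Longrightarrow> PXarc r s a b \<Longrightarrow> PXarc r s (g b) (g a)"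
proof -
  assume r4: "r \<noteq> 4" and v: "v \<in> V" and p: "\<not> pres v" and ab: "PXarc r s a b"
  have a: "a \<in> V" using arc_V1[OF ab] .
  have pa: "\<not> pres a" using pres_const[OF r4 v a] p by simp
  have "b \<in> outs a" using out_mem[OF a] ab by simp
  then have "g b \<in> ins (g a)" using npres[OF r4 a pa] by blast
  then show ?thesis using in_mem[OF gV[OF a]] by simp
qed

lemma shift: "(\<And>a b. PXarc r s a b \<Longrightarrow> PXarc r s (g a) (g b)) \<Longrightarrow> v0 \<in> V \<Longrightarrow>
   \<exists>d<r. \<forall>v\<in>V. lay (g v) = (lay v + d) mod r"
proof -
  assume h: "\<And>a b. PXarc r s a b \<Longrightarrow> PXarc r s (g a) (g b)" and v0: "v0 \<in> V"
  define d where "d = (lay (g v0) + (r - lay v0)) mod r"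
  define P where "P v \<longleftrightarrow> lay (g v) = (lay v + d) mod r" for v
  have "P v0"
  proof -
    have "(lay v0 + d) mod r = (lay v0 + (lay (g v0) + (r - lay v0))) mod r"
      unfolding d_def by (simp add: mod_add_right_eq)
    also have "lay v0 + (lay (g v0) + (r - lay v0)) = lay (g v0) + r" using V_lay[OF v0] by simp
    finally show ?thesis unfolding P_def using V_lay[OF gV[OF v0]] by simp
  qed
  have step: "P a = P b" if ab: "PXarc r s a b" for a b
  proof -
    have a: "a \<in> V" using arc_V1[OF ab] .
    have lb: "lay b = (lay a + 1) mod r" using lay_arc[OF ab] .
    have lgb: "lay (g b) = (lay (g a) + 1) mod r" using lay_arc[OF h[OF ab]] .
    have r1: "((lay a + 1) mod r + d) mod r = (1 + (lay a + d)) mod r"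
      by (subst mod_add_left_eq) (simp add: ac_simps)
    have "P b \<longleftrightarrow> (1 + lay (g a)) mod r = (1 + (lay a + d)) mod r"
      unfolding P_def lb lgb r1 by (simp add: ac_simps)
    also have "\<dots> \<longleftrightarrow> lay (g a) mod r = (lay a + d) mod r" by (rule mod_cancel_nat)
    also have "\<dots> \<longleftrightarrow> P a" unfolding P_def using V_lay[OF gV[OF a]] by simp
    finally show ?thesis by simp
  qed
  have "\<forall>v\<in>V. P v" using const_on_V[of P v0] step \<open>P v0\<close> v0 by blast
  moreover have "d < r" unfolding d_def using r3 by simp
  ultimately show ?thesis unfolding P_def by blast
qed

lemma rshift: "(\<And>a b. PXarc r s a b \<Longrightarrow> PXarc r s (g b) (g a)) \<Longrightarrow> v \<in> V \<Longrightarrow> w \<in> V \<Longrightarrow>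
   (lay (g v) + lay v) mod r = (lay (g w) + lay w) mod r"
proof -
  assume h: "\<And>a b. PXarc r s a b \<Longrightarrow> PXarc r s (g b) (g a)" and v: "v \<in> V" and w: "w \<in> V"
  have step: "(lay (g a) + lay a) mod r = (lay (g b) + lay b) mod r" if ab: "PXarc r s a b" for a b
  proof -
    have lb: "lay b = (lay a + 1) mod r" using lay_arc[OF ab] .
    have lga: "lay (g a) = (lay (g b) + 1) mod r" using lay_arc[OF h[OF ab]] .
    have "(lay (g a) + lay a) mod r = (lay (g b) + 1 + lay a) mod r" unfolding lga by (simp add: mod_add_left_eq)
    also have "\<dots> = (lay (g b) + (lay a + 1)) mod r" by (simp add: ac_simps)
    also have "\<dots> = (lay (g b) + lay b) mod r" unfolding lb by (simp add: mod_add_right_eq)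
    finally show ?thesis .
  qed
  show ?thesis using const_on_V[of "\<lambda>v. (lay (g v) + lay v) mod r" v w] step v w by blast
qed

definition FE where "FE = {e \<in> PXE r s. g ` e = e}"

lemma FE_cases: "e \<in> FE \<Longrightarrow> \<exists>a b. PXarc r s a b \<and> e = {a, b} \<and> ((g a = a \<and> g b = b) \<or> (g a = b \<and> g b = a))"
proof -
  assume "e \<in> FE"
  then have e: "e \<in> PXE r s" and ge: "g ` e = e" by (auto simp: FE_def)
  then obtain a c where a: "a \<in> V" "c \<in> {0,1}" "e = {a, outv a c}" using edge_param by auto
  have ab: "PXarc r s a (outv a c)" unfolding arc_iff using a by (intro conjI exI[where x=c]) auto
  have "{g a, g (outv a c)} = {a, outv a c}" using ge a(3) by simp
  then have "(g a = a \<and> g (outv a c) = outv a c) \<or> (g a = outv a c \<and> g (outv a c) = a)"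
    by (auto simp: doubleton_eq_iff)
  then show ?thesis using ab a(3) by blast
qed

lemma FE_rot: "0 < d \<Longrightarrow> d < r \<Longrightarrow> \<forall>v\<in>V. lay (g v) = (lay v + d) mod r \<Longrightarrow> FE = {}"
proof (rule ccontr)
  assume d: "0 < d" "d < r" and h: "\<forall>v\<in>V. lay (g v) = (lay v + d) mod r" and ne: "FE \<noteq> {}"
  then obtain e where "e \<in> FE" by blast
  then obtain a b where ab: "PXarc r s a b" and c: "(g a = a \<and> g b = b) \<or> (g a = b \<and> g b = a)"
    using FE_cases by blast
  have a: "a \<in> V" and b: "b \<in> V" using arc_V1[OF ab] arc_V2[OF ab] by auto
  have la: "lay a < r" using V_lay[OF a] .
  have lb: "lay b = (lay a + 1) mod r" using lay_arc[OF ab] .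
  show False using c
  proof
    assume "g a = a \<and> g b = b"
    then have "(lay a + d) mod r = lay a" using h a by metis
    then have "d mod r = 0" using mod_self_shift[OF la] by blast
    then show False using d by simp
  next
    assume gg: "g a = b \<and> g b = a"
    then have "(lay a + d) mod r = (lay a + 1) mod r" using h a lb by metis
    then have "d mod r = 1 mod r" using mod_cancel_nat by blast
    then have d1: "d = 1" using d r3 by simp
    have "lay a = (lay b + 1) mod r" using h b gg d1 by metis
    also have "\<dots> = (lay a + 2) mod r" unfolding lb by (simp add: mod_Suc_eq)
    finally show False using lay_ne1[OF la] by simp
  qed
qed

lemma FE_rev: "(\<And>a b. PXarc r s a b \<Longrightarrow> PXarc r s (g b) (g a)) \<Longrightarrow> v0 \<in> V \<Longrightarrow> card FE \<le> 2 * 2 ^ s"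
proof -
  assume h: "\<And>a b. PXarc r s a b \<Longrightarrow> PXarc r s (g b) (g a)" and v0: "v0 \<in> V"
  define e0 where "e0 = (lay (g v0) + lay v0) mod r"
  have inv: "\<And>v. v \<in> V \<Longrightarrow> (lay (g v) + lay v) mod r = e0" unfolding e0_def using rshift[OF h _ v0] by blast
  define Y where "Y = {y. y < r \<and> (2 * y + 1) mod r = e0}"
  define T where "T = {a \<in> V. lay a \<in> Y}"
  have sub: "FE \<subseteq> (\<lambda>a. {a, g a}) ` T"
  proof
    fix e assume "e \<in> FE"
    then obtain a b where ab: "PXarc r s a b" and eab: "e = {a, b}" and c: "(g a = a \<and> g b = b) \<or> (g a = b \<and> g b = a)"
      using FE_cases by blast
    have a: "a \<in> V" and b: "b \<in> V" using arc_V1[OF ab] arc_V2[OF ab] by auto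
    have la: "lay a < r" using V_lay[OF a] .
    have lb: "lay b = (lay a + 1) mod r" using lay_arc[OF ab] .
    have nf: "\<not> (g a = a \<and> g b = b)"
    proof
      assume gg: "g a = a \<and> g b = b"
      have "(lay a + lay a) mod r = e0" using inv[OF a] gg by simp
      moreover have "(lay b + lay b) mod r = e0" using inv[OF b] gg by simp
      moreover have "(lay b + lay b) mod r = (lay a + lay a + 2) mod r"
        unfolding lb by (subst mod_add_eq) (simp add: ac_simps)
      ultimately have "(lay a + lay a + 2) mod r = (lay a + lay a + 0) mod r" by simp
      then have "2 mod r = 0" using mod_cancel_nat[of "lay a + lay a" 2 r 0] by simp
      then show False using r3 by simp
    qed
    then have gg: "g a = b" using c by blast
    have "(lay b + lay a) mod r = e0" using inv[OF a] gg by simp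
    moreover have "(lay b + lay a) mod r = (2 * lay a + 1) mod r"
      unfolding lb by (subst mod_add_left_eq) (simp add: ac_simps mult_2_right)
    ultimately have "lay a \<in> Y" using la unfolding Y_def by simp
    then have "a \<in> T" using a unfolding T_def by simp
    then show "e \<in> (\<lambda>a. {a, g a}) ` T" using eab gg by blast
  qed
  have fT: "finite T" unfolding T_def using fin_V by simp
  have "card FE \<le> card ((\<lambda>a. {a, g a}) ` T)" using sub fT by (intro card_mono) auto
  also have "\<dots> \<le> card T" using fT by (rule card_image_le)
  also have "card T = card Y * 2 ^ s" unfolding T_def using card_layers[of Y] unfolding Y_def by auto
  also have "\<dots> \<le> 2 * 2 ^ s" using card_Y[of e0] unfolding Y_def by simp
  finally show ?thesis .
qed

lemma fpr_eq: "fpr_edges (PXE r s) g = real (card FE) / real (card (PXE r s))"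
  unfolding fpr_edges_def FE_def by simp

lemma fpr_small: "card FE \<le> 2 * 2 ^ s \<Longrightarrow> fpr_edges (PXE r s) g \<le> 1 / 3"
proof -
  assume c: "card FE \<le> 2 * 2 ^ s"
  have cE: "card (PXE r s) = 2 * (r * 2 ^ s)" using card_E card_V by simp
  have pos: "0 < real (card (PXE r s))" using cE r3 by simp
  have "3 * real (card FE) \<le> real (card (PXE r s))"
  proof -
    have "3 * card FE \<le> 3 * (2 * 2 ^ s)" using c by simp
    also have "\<dots> \<le> 2 * (r * 2 ^ s)" using r3 by simp
    finally show ?thesis using cE by (simp add: of_nat_mult[symmetric] del: of_nat_mult)
  qed
  then show ?thesis unfolding fpr_eq using pos by (simp add: divide_le_eq)
qed

end


lemma foldr_tau: "distinct ys \<Longrightarrow> foldr (\<lambda>y f. PXtau y \<circ> f) ys id p = (if fst p \<in> set ys then (fst p, 1 - snd p) else p)"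
proof (induction ys arbitrary: p)
  case Nil then show ?case by simp
next
  case (Cons y ys)
  then show ?case by (auto simp: PXtau_def)
qed

lemma foldr_tau_K: "\<forall>y\<in>set ys. y < r \<Longrightarrow> foldr (\<lambda>y f. PXtau y \<circ> f) ys id \<in> PXK r"
proof (induction ys)
  case Nil
  have "foldr (\<lambda>y f. PXtau y \<circ> f) [] id = id" by simp
  then show ?case using PXK.PXK_id by metis
next
  case (Cons y ys)
  have e: "foldr (\<lambda>y f. PXtau y \<circ> f) (y#ys) id = PXtau y \<circ> foldr (\<lambda>y f. PXtau y \<circ> f) ys id"
    by (simp add: fun_eq_iff)
  have "y < r" "\<forall>y\<in>set ys. y < r" using Cons.prems by auto
  then show ?case unfolding e using PXK.PXK_step Cons.IH by blast
qed

locale pxk = pxg +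
  assumes hp: "\<And>a b. PXarc r s a b \<Longrightarrow> PXarc r s (g a) (g b)"
    and hl: "\<And>v. v \<in> V \<Longrightarrow> lay (g v) = lay v"
begin

lemma g_out: "v \<in> V \<Longrightarrow> c < 2 \<Longrightarrow> \<exists>c'<2. g (outv v c) = outv (g v) c'"
proof -
  assume v: "v \<in> V" and c: "c < 2"
  have "PXarc r s v (outv v c)" unfolding arc_iff using v c by blast
  then have "PXarc r s (g v) (g (outv v c))" by (rule hp)
  then show ?thesis unfolding arc_iff by blast
qed

lemma g_in: "v \<in> V \<Longrightarrow> c < 2 \<Longrightarrow> \<exists>c'<2. g (invv v c) = invv (g v) c'"
proof -
  assume v: "v \<in> V" and c: "c < 2"
  have "PXarc r s (invv v c) v" unfolding arc_in_iff using v c by blast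
  then have "PXarc r s (g (invv v c)) (g v)" by (rule hp)
  then show ?thesis unfolding arc_in_iff by blast
qed

lemma B1: "v \<in> V \<Longrightarrow> c < 2 \<Longrightarrow> Suc j < s \<Longrightarrow> g (outv v c) ! j = g v ! Suc j"
  using g_out[of v c] outv_nth[OF gV] by force

lemma B2: "v \<in> V \<Longrightarrow> c < 2 \<Longrightarrow> Suc j < s \<Longrightarrow> g (invv v c) ! Suc j = g v ! j"
  using g_in[of v c] invv_nth[OF gV, of v "Suc j"] by force

primrec outn where "outn v 0 = v" | "outn v (Suc n) = outn (outv v 0) n"
primrec invn where "invn v 0 = v" | "invn v (Suc n) = invn (invv v 0) n"

lemma outn_V: "v \<in> V \<Longrightarrow> outn v n \<in> V"
proof (induction n arbitrary: v)
  case 0 then show ?case by simp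
next
  case (Suc n) then show ?case using Suc.IH[OF outv_V[OF Suc.prems, of 0]] by simp
qed
lemma invn_V: "v \<in> V \<Longrightarrow> invn v n \<in> V"
proof (induction n arbitrary: v)
  case 0 then show ?case by simp
next
  case (Suc n) then show ?case using Suc.IH[OF invv_V[OF Suc.prems, of 0]] by simp
qed

lemma outn_nth: "v \<in> V \<Longrightarrow> j + n < s \<Longrightarrow> outn v n ! j = v ! (j + n)"
proof (induction n arbitrary: v j)
  case 0 then show ?case by simp
next
  case (Suc n)
  have "outn v (Suc n) ! j = outv v 0 ! (j + n)" using Suc outv_V[of v 0] by simp
  also have "\<dots> = v ! (j + Suc n)" using outv_nth[OF Suc.prems(1), of "j + n" 0] Suc.prems by simp
  finally show ?case .
qed

lemma g_outn_nth: "v \<in> V \<Longrightarrow> j + n < s \<Longrightarrow> g (outn v n) ! j = g v ! (j + n)"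
proof (induction n arbitrary: v j)
  case 0 then show ?case by simp
next
  case (Suc n)
  have "g (outn v (Suc n)) ! j = g (outv v 0) ! (j + n)" using Suc outv_V[of v 0] by simp
  also have "\<dots> = g v ! (j + Suc n)" using B1[OF Suc.prems(1), of 0 "j + n"] Suc.prems by simp
  finally show ?case .
qed

lemma g_invn_nth: "v \<in> V \<Longrightarrow> j + n < s \<Longrightarrow> g (invn v n) ! (j + n) = g v ! j"
proof (induction n arbitrary: v j)
  case 0 then show ?case by simp
next
  case (Suc n)
  have "g (invn v (Suc n)) ! (j + Suc n) = g (invn (invv v 0) n) ! (Suc j + n)" by simp
  also have "\<dots> = g (invv v 0) ! Suc j" using Suc.IH[of "invv v 0" "Suc j"] Suc.prems invv_V[of v 0] by simp
  also have "\<dots> = g v ! j" using B2[OF Suc.prems(1), of 0 j] Suc.prems by simp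
  finally show ?case .
qed

lemma invn_eq: "v \<in> V \<Longrightarrow> w \<in> V \<Longrightarrow> lay v = lay w \<Longrightarrow> n < s \<Longrightarrow> take (s - n) v = take (s - n) w \<Longrightarrow> invn v n = invn w n"
proof (induction n arbitrary: v w)
  case 0
  then show ?case using V_len[of v] V_len[of w] by simp
next
  case (Suc n)
  have iv: "invv v 0 \<in> V" "invv w 0 \<in> V" using invv_V Suc.prems by auto
  have l: "lay (invv v 0) = lay (invv w 0)" using lay_invv Suc.prems by simp
  have t: "take (s - n) (invv v 0) = take (s - n) (invv w 0)"
  proof -
    have lv: "length v = s" "length w = s" using V_len Suc.prems by auto
    have "take (s - n) (invv v 0) = ((lay v + r - 1) mod r, 0) # take (s - Suc n) (butlast v)"
      using Suc.prems(4) by (simp add: invv_def take_Cons' Suc_diff_Suc)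
    also have "take (s - Suc n) (butlast v) = take (s - Suc n) v" using lv Suc.prems(4) by (simp add: take_butlast)
    finally have a: "take (s - n) (invv v 0) = ((lay v + r - 1) mod r, 0) # take (s - Suc n) v" .
    have "take (s - n) (invv w 0) = ((lay w + r - 1) mod r, 0) # take (s - Suc n) (butlast w)"
      using Suc.prems(4) by (simp add: invv_def take_Cons' Suc_diff_Suc)
    also have "take (s - Suc n) (butlast w) = take (s - Suc n) w" using lv Suc.prems(4) by (simp add: take_butlast)
    finally have b: "take (s - n) (invv w 0) = ((lay w + r - 1) mod r, 0) # take (s - Suc n) w" .
    show ?thesis using a b Suc.prems(3,5) by simp
  qed
  show ?case using Suc.IH[OF iv l _ t] Suc.prems(4) by simp
qed

lemma claimA: "v \<in> V \<Longrightarrow> w \<in> V \<Longrightarrow> v ! 0 = w ! 0 \<Longrightarrow> g v ! 0 = g w ! 0"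
proof -
  assume v: "v \<in> V" and w: "w \<in> V" and e: "v ! 0 = w ! 0"
  have l: "lay v = lay w" using e by (simp add: lay_def)
  have t: "take (s - (s - 1)) v = take (s - (s - 1)) w"
    using e s1 V_len[OF v] V_len[OF w] by (simp add: take_Suc_conv_app_nth)
  have ie: "invn v (s - 1) = invn w (s - 1)" using invn_eq[OF v w l _ t] s1 by simp
  have "g v ! 0 = g (invn v (s - 1)) ! (0 + (s - 1))" using g_invn_nth[OF v, of 0 "s - 1"] s1 by simp
  also have "\<dots> = g w ! 0" unfolding ie using g_invn_nth[OF w, of 0 "s - 1"] s1 by simp
  finally show ?thesis .
qed

definition kf where "kf p = g (SOME v. v \<in> V \<and> v ! 0 = p) ! 0"

lemma kf0: "v \<in> V \<Longrightarrow> g v ! 0 = kf (v ! 0)"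
proof -
  assume v: "v \<in> V"
  have "\<exists>u. u \<in> V \<and> u ! 0 = v ! 0" using v by blast
  then have u: "(SOME u. u \<in> V \<and> u ! 0 = v ! 0) \<in> V \<and> (SOME u. u \<in> V \<and> u ! 0 = v ! 0) ! 0 = v ! 0"
    by (rule someI_ex)
  then show ?thesis unfolding kf_def using claimA[OF v] by metis
qed

lemma g_map: "v \<in> V \<Longrightarrow> g v = map kf v"
proof (rule nth_equalityI)
  assume v: "v \<in> V"
  show "length (g v) = length (map kf v)" using V_len[OF v] V_len[OF gV[OF v]] by simp
  fix j assume "j < length (g v)"
  then have j: "j < s" using V_len[OF gV[OF v]] by simp
  have "g v ! j = g (outn v j) ! 0" using g_outn_nth[OF v, of 0 j] j by simp
  also have "\<dots> = kf (outn v j ! 0)" using kf0[OF outn_V[OF v]] .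
  also have "\<dots> = kf (v ! j)" using outn_nth[OF v, of 0 j] j by simp
  finally show "g v ! j = map kf v ! j" using j V_len[OF v] by simp
qed

definition zs where "zs b = b # replicate (s - 1) (0::nat)"

lemma zs_BL: "b < 2 \<Longrightarrow> zs b \<in> BL"
  using s1 by (auto simp: zs_def BL_def less_2_cases_iff)

lemma mk_zs0: "y < r \<Longrightarrow> mk y (zs b) ! 0 = (y, b)"
  using s1 by (simp add: mk_def zs_def)

lemma kf_fst: "p \<in> PXpt r \<Longrightarrow> fst (kf p) = fst p \<and> snd (kf p) < 2"
proof -
  assume p: "p \<in> PXpt r"
  obtain y b where yb: "p = (y, b)" "y < r" "b < 2" using p by (auto simp: PXpt_def)
  define u where "u = mk y (zs b)"
  have u: "u \<in> V" "lay u = y" using mk_V[OF yb(2) zs_BL[OF yb(3)]] u_def by auto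
  have u0: "u ! 0 = p" using mk_zs0[OF yb(2)] u_def yb by simp
  have "kf p = g u ! 0" using kf0[OF u(1)] u0 by simp
  moreover have "g u ! 0 = ((lay (g u) + 0) mod r, snd (g u ! 0))" using V_nth[OF gV[OF u(1)], of 0] s1 by simp
  moreover have "snd (g u ! 0) < 2" using V_snd[OF gV[OF u(1)], of 0] s1 by simp
  moreover have "fst (g u ! 0) = lay (g u)" by (simp add: lay_def)
  ultimately show ?thesis using hl[OF u(1)] u(2) yb by simp
qed

lemma kf_ne: "y < r \<Longrightarrow> kf (y, 0) \<noteq> kf (y, 1)"
proof
  assume y: "y < r" and e: "kf (y, 0) = kf (y, 1)"
  define u where "u = mk y (zs 0)"
  define u' where "u' = mk y (zs 1)"
  have u: "u \<in> V" and u': "u' \<in> V" using mk_V[OF y zs_BL] u_def u'_def by auto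
  have "map kf u = map kf u'"
  proof (rule nth_equalityI)
    show "length (map kf u) = length (map kf u')" using V_len[OF u] V_len[OF u'] by simp
    fix j assume "j < length (map kf u)"
    then have j: "j < s" using V_len[OF u] by simp
    show "map kf u ! j = map kf u' ! j"
    proof (cases j)
      case 0 then show ?thesis using e mk_zs0[OF y] u_def u'_def j by (simp add: mk_def zs_def)
    next
      case (Suc i) then show ?thesis using j by (simp add: u_def u'_def mk_def zs_def)
    qed
  qed
  then have "g u = g u'" using g_map[OF u] g_map[OF u'] by simp
  then have "u = u'" using g_eq[OF u u'] by simp
  then have "u ! 0 = u' ! 0" by simp
  then show False using mk_zs0[OF y] u_def u'_def by simp
qed

definition II where "II = {y. y < r \<and> kf (y, 0) = (y, 1)}"
definition kk where "kk = foldr (\<lambda>y f. PXtau y \<circ> f) (filter (\<lambda>y. y \<in> II) [0..<r]) id"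

lemma kk_K: "kk \<in> PXK r" unfolding kk_def by (rule foldr_tau_K) auto

lemma kk_app: "kk p = (if fst p \<in> II then (fst p, 1 - snd p) else p)"
  unfolding kk_def using foldr_tau[of "filter (\<lambda>y. y \<in> II) [0..<r]" p] by (auto simp: II_def)

lemma kk_kf: "p \<in> PXpt r \<Longrightarrow> kk p = kf p"
proof -
  assume p: "p \<in> PXpt r"
  obtain y b where yb: "p = (y, b)" "y < r" "b < 2" using p by (auto simp: PXpt_def)
  have p0: "(y, 0) \<in> PXpt r" and p1: "(y, 1) \<in> PXpt r" using yb by (auto simp: PXpt_def)
  have k0: "kf (y, 0) = (y, snd (kf (y, 0)))" "snd (kf (y, 0)) < 2" using kf_fst[OF p0] by (auto simp: prod_eq_iff)
  have k1: "kf (y, 1) = (y, snd (kf (y, 1)))" "snd (kf (y, 1)) < 2" using kf_fst[OF p1] by (auto simp: prod_eq_iff)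
  have ne: "kf (y, 0) \<noteq> kf (y, 1)" using kf_ne[OF yb(2)] .
  show ?thesis
  proof (cases "y \<in> II")
    case True
    then have "kf (y, 0) = (y, 1)" by (simp add: II_def)
    moreover have "snd (kf (y, 1)) \<noteq> 1" using ne kf_fst[OF p1] \<open>kf (y, 0) = (y, 1)\<close> by (auto simp: prod_eq_iff)
    ultimately have "snd (kf (y, 1)) = 0" using k1(2) by linarith
    then have "kf (y, 1) = (y, 0)" using kf_fst[OF p1] by (simp add: prod_eq_iff)
    then show ?thesis using True yb \<open>kf (y, 0) = (y, 1)\<close> kk_app by (auto simp: less_2_cases_iff)
  next
    case False
    then have "kf (y, 0) \<noteq> (y, 1)" using yb(2) unfolding II_def by simp
    then have "snd (kf (y, 0)) \<noteq> 1" using kf_fst[OF p0] by (auto simp: prod_eq_iff)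
    then have "snd (kf (y, 0)) = 0" using k0(2) by linarith
    then have a: "kf (y, 0) = (y, 0)" using kf_fst[OF p0] by (simp add: prod_eq_iff)
    moreover have "snd (kf (y, 1)) \<noteq> 0" using ne kf_fst[OF p1] a by (auto simp: prod_eq_iff)
    ultimately have "snd (kf (y, 1)) = 1" using k1(2) by linarith
    then have "kf (y, 1) = (y, 1)" using kf_fst[OF p1] by (simp add: prod_eq_iff)
    then show ?thesis using False yb a kk_app by (auto simp: less_2_cases_iff)
  qed
qed

lemma g_kk: "v \<in> V \<Longrightarrow> g v = map kk v"
proof -
  assume v: "v \<in> V"
  have "map kk v = map kf v"
  proof (rule map_cong[OF refl])
    fix p assume "p \<in> set v"
    then obtain j where "j < s" "p = v ! j" using V_len[OF v] by (auto simp: in_set_conv_nth)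
    then show "kk p = kf p" using kk_kf V_pt[OF v] by simp
  qed
  then show ?thesis using g_map[OF v] by simp
qed

end


context pxg begin

lemma fpr_big: "fpr_edges (PXE r s) g > 1 / 3 \<Longrightarrow> card (PXE r s) < 3 * card FE"
proof -
  assume f: "fpr_edges (PXE r s) g > 1 / 3"
  have cE: "card (PXE r s) = 2 * (r * 2 ^ s)" using card_E card_V by simp
  have pos: "0 < real (card (PXE r s))" using cE r3 by simp
  have "1 / 3 < real (card FE) / real (card (PXE r s))" using f unfolding fpr_eq .
  then have "real (card (PXE r s)) < 3 * real (card FE)" using pos by (simp add: field_simps)
  then show ?thesis by linarith
qed

end

context pxk begin

lemma fixed_not_i: "i \<in> II \<Longrightarrow> a \<in> V \<Longrightarrow> g a = a \<Longrightarrow> j < s \<Longrightarrow> (lay a + j) mod r \<noteq> i"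
proof
  assume i: "i \<in> II" and a: "a \<in> V" and ga: "g a = a" and j: "j < s" and e: "(lay a + j) mod r = i"
  have "a ! j = kk (a ! j)" using g_kk[OF a] ga j V_len[OF a] by (metis nth_map)
  moreover have "kk (a ! j) = (i, 1 - snd (a ! j))" using kk_app[of "a ! j"] V_fst[OF a j] e i by simp
  moreover have "snd (a ! j) < 2" using V_snd[OF a j] .
  ultimately have "snd (a ! j) = 1 - snd (a ! j)" by (metis snd_conv)
  then show False using V_snd[OF a j] by arith
qed

theorem K_result:
  assumes ne: "\<exists>v\<in>V. g v \<noteq> v" and fpr: "fpr_edges (PXE r s) g > 1 / 3"
  shows "3 * s < 2 * r - 3 \<and> (\<exists>k\<in>PXK r. \<forall>v\<in>V. g v = map k v) \<and> (\<forall>e\<in>PXE r s. g ` e = e \<longrightarrow> (\<forall>v\<in>e. g v = v))"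
proof -
  have bothfix: "PXarc r s a b \<and> e = {a,b} \<and> g a = a \<and> g b = b" if "e \<in> FE" "PXarc r s a b" "e = {a, b}"
     "(g a = a \<and> g b = b) \<or> (g a = b \<and> g b = a)" for e a b
  proof -
    have a: "a \<in> V" using arc_V1[OF that(2)] .
    have "\<not> (g a = b)"
    proof
      assume "g a = b"
      then have "lay b = lay a" using hl[OF a] by simp
      moreover have "lay b = (lay a + 1) mod r" using lay_arc[OF that(2)] .
      ultimately have "(lay a + 1) mod r = lay a" by simp
      then have "1 mod r = 0" using mod_self_shift[OF V_lay[OF a], of 1] by blast
      then show False using r3 by simp
    qed
    then show ?thesis using that by blast
  qed
  have third: "\<forall>e\<in>PXE r s. g ` e = e \<longrightarrow> (\<forall>v\<in>e. g v = v)"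
  proof (intro ballI impI)
    fix e v assume "e \<in> PXE r s" "g ` e = e" "v \<in> e"
    then have eF: "e \<in> FE" by (simp add: FE_def)
    then obtain a b where "PXarc r s a b" "e = {a, b}" "(g a = a \<and> g b = b) \<or> (g a = b \<and> g b = a)"
      using FE_cases by blast
    then show "g v = v" using bothfix[OF eF] \<open>v \<in> e\<close> by blast
  qed
  have second: "\<exists>k\<in>PXK r. \<forall>v\<in>V. g v = map k v" using kk_K g_kk by blast
  have "II \<noteq> {}"
  proof
    assume "II = {}"
    then have "\<forall>v\<in>V. g v = v" using g_kk kk_app by (simp add: map_idI)
    then show False using ne by blast
  qed
  then obtain i where i: "i \<in> II" by blast
  have ir: "i < r" using i by (simp add: II_def)
  define G where "G = {y. y < r \<and> (\<forall>j\<le>s. (y + j) mod r \<noteq> i)}"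
  define A where "A = {a \<in> V. lay a \<in> G}"
  have sub: "FE \<subseteq> (\<lambda>(a,c). {a, outv a c}) ` (A \<times> {0,1})"
  proof
    fix e assume eF: "e \<in> FE"
    then obtain a b where ab: "PXarc r s a b" "e = {a, b}" "(g a = a \<and> g b = b) \<or> (g a = b \<and> g b = a)"
      using FE_cases by blast
    then have gg: "g a = a" "g b = b" using bothfix[OF eF] by blast+
    have a: "a \<in> V" and b: "b \<in> V" using arc_V1[OF ab(1)] arc_V2[OF ab(1)] by auto
    obtain c where c: "c < 2" "b = outv a c" using ab(1) unfolding arc_iff by blast
    have "\<forall>j\<le>s. (lay a + j) mod r \<noteq> i"
    proof (intro allI impI)
      fix j assume j: "j \<le> s"
      show "(lay a + j) mod r \<noteq> i"
      proof (cases "j < s")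
        case True then show ?thesis using fixed_not_i[OF i a gg(1)] by simp
      next
        case False
        then have js: "j = s" using j by simp
        have "(lay b + (s - 1)) mod r \<noteq> i" using fixed_not_i[OF i b gg(2), of "s - 1"] s1 by simp
        moreover have "(lay b + (s - 1)) mod r = (lay a + j) mod r"
          unfolding lay_arc[OF ab(1)] js using s1 by (subst mod_add_left_eq) simp
        ultimately show ?thesis by simp
      qed
    qed
    then have "a \<in> A" using a V_lay[OF a] unfolding A_def G_def by simp
    then have "(a, c) \<in> A \<times> {0,1}" using c by auto
    then show "e \<in> (\<lambda>(a,c). {a, outv a c}) ` (A \<times> {0,1})" using ab(2) c(2) by (intro rev_image_eqI[of "(a,c)"]) auto
  qed
  have fA: "finite A" unfolding A_def using fin_V by simp
  have cA: "card A = (r - Suc s) * 2 ^ s" unfolding A_def using card_layers[of G] card_G[OF ir] unfolding G_def by auto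
  have "card FE \<le> card ((\<lambda>(a,c). {a, outv a c}) ` (A \<times> {0,1}))" using sub fA by (intro card_mono) auto
  also have "\<dots> \<le> card (A \<times> {0::nat,1})" using fA by (intro card_image_le) auto
  also have "\<dots> = (r - Suc s) * 2 ^ s * 2" using cA by (simp add: card_cartesian_product)
  finally have cF: "card FE \<le> (r - Suc s) * 2 ^ s * 2" .
  have "2 * (r * 2 ^ s) < 3 * card FE" using fpr_big[OF fpr] card_E card_V by simp
  also have "\<dots> \<le> 3 * ((r - Suc s) * 2 ^ s * 2)" using cF by simp
  finally have "r * (2 * 2 ^ s) < (3 * (r - Suc s)) * (2 * 2 ^ s)" by (simp add: algebra_simps)
  then have "r < 3 * (r - Suc s)" by simp
  then have first: "3 * s < 2 * r - 3" using sr by simp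
  show ?thesis using first second third by blast
qed

end


context pxg begin

lemma par_arc: "r = 4 \<Longrightarrow> PXarc r s a b \<Longrightarrow> odd (lay a + lay b)"
proof -
  assume r: "r = 4" and ab: "PXarc r s a b"
  have "lay a < 4" using V_lay[OF arc_V1[OF ab]] r by simp
  moreover have "lay b = (lay a + 1) mod 4" using lay_arc[OF ab] r by simp
  ultimately show ?thesis by presburger
qed

lemma par_adj: "r = 4 \<Longrightarrow> PXadj r s a b \<Longrightarrow> odd (lay a + lay b)"
proof -
  assume r: "r = 4" and ad: "PXadj r s a b"
  then have "PXarc r s a b \<or> PXarc r s b a" using ad unfolding adj_iff by blast
  then show ?thesis using par_arc[OF r, of a b] par_arc[OF r, of b a] by (auto simp: add.commute)
qed

lemma s1_adj: "r = 4 \<Longrightarrow> s = 1 \<Longrightarrow> a \<in> V \<Longrightarrow> b \<in> V \<Longrightarrow> odd (lay a + lay b) \<Longrightarrow> PXadj r s a b"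
proof -
  assume r: "r = 4" and s: "s = 1" and a: "a \<in> V" and b: "b \<in> V" and o: "odd (lay a + lay b)"
  have la: "lay a < 4" "lay b < 4" using V_lay[OF a] V_lay[OF b] r by auto
  have arcs: "PXarc r s x y" if x: "x \<in> V" and y: "y \<in> V" and l: "lay y = (lay x + 1) mod r" for x y
  proof -
    have ly: "length y = 1" using V_len[OF y] s by simp
    have "y = [y ! 0]" using ly by (cases y) auto
    also have "y ! 0 = ((lay y + 0) mod r, snd (y ! 0))" using V_nth[OF y, of 0] s by simp
    finally have "y = [((lay x + 1) mod r, snd (y ! 0))]" using l V_lay[OF y] by simp
    moreover have "tl x = []" using V_len[OF x] s by (cases x) auto
    ultimately have "y = outv x (snd (y ! 0))" unfolding outv_def using s by simp
    moreover have "snd (y ! 0) < 2" using V_snd[OF y, of 0] s by simp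
    ultimately show ?thesis unfolding arc_iff using x by blast
  qed
  have "lay b = (lay a + 1) mod 4 \<or> lay a = (lay b + 1) mod 4" using la o
    by presburger
  then have "lay b = (lay a + 1) mod r \<or> lay a = (lay b + 1) mod r" using r by simp
  then show ?thesis unfolding adj_iff using arcs[OF a b] arcs[OF b a] by blast
qed

lemma case41: "r = 4 \<Longrightarrow> s = 1 \<Longrightarrow> fpr_edges (PXE r s) g > 1 / 3 \<Longrightarrow>
   \<forall>e\<in>PXE r s. g ` e = e \<longrightarrow> (\<forall>v\<in>e. g v = v)"
proof (rule ccontr)
  assume r: "r = 4" and s: "s = 1" and f: "fpr_edges (PXE r s) g > 1 / 3"
    and "\<not> (\<forall>e\<in>PXE r s. g ` e = e \<longrightarrow> (\<forall>v\<in>e. g v = v))"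
  then obtain e v where e: "e \<in> PXE r s" "g ` e = e" "v \<in> e" "g v \<noteq> v" by blast
  then have eF: "e \<in> FE" by (simp add: FE_def)
  then obtain a b where ab: "PXarc r s a b" "e = {a, b}" "(g a = a \<and> g b = b) \<or> (g a = b \<and> g b = a)"
    using FE_cases by blast
  have sw: "g a = b" "g b = a" using ab e(3,4) by auto
  have a: "a \<in> V" and b: "b \<in> V" using arc_V1[OF ab(1)] arc_V2[OF ab(1)] by auto
  have oab: "odd (lay a + lay b)" using par_arc[OF r ab(1)] .
  have flip: "odd (lay (g w) + lay w)" if w: "w \<in> V" for w
  proof (cases "even (lay w + lay a)")
    case True
    then have "odd (lay w + lay b)" using oab by presburger
    then have "PXadj r s w b" using s1_adj[OF r s w b] by simp
    then have "PXadj r s (g w) a" using g_adj[OF w b] sw by simp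
    then have "odd (lay (g w) + lay a)" using par_adj[OF r] by simp
    then show ?thesis using True by presburger
  next
    case False
    then have "PXadj r s w a" using s1_adj[OF r s w a] by simp
    then have "PXadj r s (g w) b" using g_adj[OF w a] sw by simp
    then have "odd (lay (g w) + lay b)" using par_adj[OF r] by simp
    then show ?thesis using False oab by presburger
  qed
  define T where "T = {x \<in> V. lay x \<in> {0, 2}}"
  have sub: "FE \<subseteq> (\<lambda>x. {x, g x}) ` T"
  proof
    fix e' assume e': "e' \<in> FE"
    then obtain x y where xy: "PXarc r s x y" "e' = {x, y}" "(g x = x \<and> g y = y) \<or> (g x = y \<and> g y = x)"
      using FE_cases by blast
    have x: "x \<in> V" and y: "y \<in> V" using arc_V1[OF xy(1)] arc_V2[OF xy(1)] by auto
    have "g x \<noteq> x" using flip[OF x] by auto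
    then have gxy: "g x = y" "g y = x" using xy(3) by auto
    have oxy: "odd (lay x + lay y)" using par_arc[OF r xy(1)] .
    have lx: "lay x < 4" "lay y < 4" using V_lay[OF x] V_lay[OF y] r by auto
    show "e' \<in> (\<lambda>x. {x, g x}) ` T"
    proof (cases "even (lay x)")
      case True
      then have "lay x = 0 \<or> lay x = 2" using lx by presburger
      then have "lay x \<in> {0, 2}" by simp
      then have "x \<in> T" using x T_def by simp
      then show ?thesis using xy(2) gxy by blast
    next
      case False
      then have "even (lay y)" using oxy by presburger
      then have "lay y = 0 \<or> lay y = 2" using lx by presburger
      then have "lay y \<in> {0, 2}" by simp
      then have "y \<in> T" using y T_def by simp
      moreover have "e' = {y, g y}" using xy(2) gxy by auto
      ultimately show ?thesis by blast
    qed
  qed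
  have fT: "finite T" unfolding T_def using fin_V by simp
  have "card FE \<le> card ((\<lambda>x. {x, g x}) ` T)" using sub fT by (intro card_mono) auto
  also have "\<dots> \<le> card T" using fT by (rule card_image_le)
  also have "card T = card {0::nat, 2} * 2 ^ s" unfolding T_def using r by (intro card_layers) auto
  finally have "card FE \<le> 4" using s by simp
  moreover have "card (PXE r s) = 16" using card_E card_V r s by simp
  ultimately show False using fpr_big[OF f] by simp
qed

end


definition mkE :: "nat \<Rightarrow> nat \<Rightarrow> nat \<Rightarrow> nat list \<Rightarrow> (nat \<times> nat) list" where
  "mkE r s y bs = map (\<lambda>j. ((y + j) mod r, bs ! j)) [0..<s]"
definition VL where "VL r s = concat (map (\<lambda>y. map (mkE r s y) (List.n_lists s [0,1])) [0..<r])"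
definition nbE :: "nat \<Rightarrow> nat \<Rightarrow> (nat \<times> nat) list \<Rightarrow> (nat \<times> nat) list list" where
  "nbE r s v = [tl v @ [((fst (v!0) + s) mod r, 0)], tl v @ [((fst (v!0) + s) mod r, 1)],
     ((fst (v!0) + r - 1) mod r, 0) # butlast v, ((fst (v!0) + r - 1) mod r, 1) # butlast v]"
definition ruleE where "ruleE r s F u w = (\<exists>y\<in>set F. w \<in> set (nbE r s y) \<and>
   (\<forall>z\<in>set (nbE r s u). z \<in> set (nbE r s y) \<longrightarrow> z \<in> set F \<or> z = w))"
definition chk2 where "chk2 r s = (\<forall>v\<in>set (VL r s). \<forall>u\<in>set (nbE r s v).
   \<forall>w\<in>set (nbE r s u). w \<in> set ((v # nbE r s v) @ filter (ruleE r s (v # nbE r s v) u) (nbE r s u)) \<or>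
     ruleE r s ((v # nbE r s v) @ filter (ruleE r s (v # nbE r s v) u) (nbE r s u)) u w)"
definition p1 where "p1 r s = (\<forall>a\<in>set (VL r s). \<forall>b\<in>set (VL r s). a \<noteq> b \<longrightarrow>
   length (filter (\<lambda>z. z \<in> set (nbE r s b)) (nbE r s a)) \<le> 2)"

context px begin

lemma VL_eq: "set (VL r s) = V"
proof -
  have bl: "set (List.n_lists s [0,1]) = BL" unfolding BL_def by (auto simp: set_n_lists)
  have "set (VL r s) = (\<Union>y\<in>{..<r}. mk y ` BL)"
    unfolding VL_def mkE_def mk_def by (auto simp: bl[symmetric])
  also have "\<dots> = (\<Union>y\<in>{..<r}. Lay y)" using Lay_eq by simp
  also have "\<dots> = V" using V_lay by (auto simp: Lay_def)
  finally show ?thesis .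
qed

lemma nbE_eq: "v \<in> V \<Longrightarrow> set (nbE r s v) = Nb v"
  unfolding nbE_def Nb_eq outs_def ins_def outv_def invv_def lay_def by auto

end

context pxg begin

lemma rule_sound: "set F \<subseteq> V \<Longrightarrow> \<forall>x\<in>set F. g x = x \<Longrightarrow> u \<in> set F \<Longrightarrow> w \<in> Nb u \<Longrightarrow> ruleE r s F u w \<Longrightarrow> g w = w"
proof -
  assume FV: "set F \<subseteq> V" and fx: "\<forall>x\<in>set F. g x = x" and u: "u \<in> set F" and w: "w \<in> Nb u" and ru: "ruleE r s F u w"
  obtain y where y: "y \<in> set F" "w \<in> set (nbE r s y)" "\<forall>z\<in>set (nbE r s u). z \<in> set (nbE r s y) \<longrightarrow> z \<in> set F \<or> z = w"
    using ru unfolding ruleE_def by blast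
  have uV: "u \<in> V" and yV: "y \<in> V" using FV u y by auto
  have wy: "w \<in> Nb y" using y(2) nbE_eq[OF yV] by simp
  have wV: "w \<in> V" using w Nb_V[OF uV] by blast
  have "g w \<in> Nb u" using Nb_g[OF uV] fx u w by (metis imageI)
  moreover have "g w \<in> Nb y" using Nb_g[OF yV] fx y(1) wy by (metis imageI)
  ultimately have "g w \<in> set F \<or> g w = w" using y(3) nbE_eq[OF uV] nbE_eq[OF yV] by blast
  then show "g w = w"
  proof
    assume gw: "g w \<in> set F"
    then have "g (g w) = g w" using fx by blast
    then have "g w = w" using g_eq[OF gV[OF wV] wV] by simp
    then show ?thesis .
  qed
qed

lemma P2step: "chk2 r s \<Longrightarrow> v \<in> V \<Longrightarrow> g v = v \<Longrightarrow> \<forall>x\<in>Nb v. g x = x \<Longrightarrow> u \<in> Nb v \<Longrightarrow> \<forall>w\<in>Nb u. g w = w"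
proof
  assume c: "chk2 r s" and v: "v \<in> V" and gv: "g v = v" and nv: "\<forall>x\<in>Nb v. g x = x" and u: "u \<in> Nb v"
  fix w assume w: "w \<in> Nb u"
  define F0 where "F0 = v # nbE r s v"
  define F1 where "F1 = F0 @ filter (ruleE r s F0 u) (nbE r s u)"
  have uV: "u \<in> V" using u Nb_V[OF v] by blast
  have F0V: "set F0 \<subseteq> V" using v Nb_V[OF v] nbE_eq[OF v] unfolding F0_def by auto
  have F0x: "\<forall>x\<in>set F0. g x = x" using gv nv nbE_eq[OF v] unfolding F0_def by auto
  have uF0: "u \<in> set F0" using u nbE_eq[OF v] unfolding F0_def by auto
  have F1V: "set F1 \<subseteq> V" using F0V Nb_V[OF uV] nbE_eq[OF uV] unfolding F1_def by auto
  have F1x: "\<forall>x\<in>set F1. g x = x"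
  proof
    fix x assume "x \<in> set F1"
    then have "x \<in> set F0 \<or> (x \<in> Nb u \<and> ruleE r s F0 u x)" using nbE_eq[OF uV] unfolding F1_def by auto
    then show "g x = x" using F0x rule_sound[OF F0V F0x uF0] by blast
  qed
  have uF1: "u \<in> set F1" using uF0 unfolding F1_def by simp
  have "w \<in> set F1 \<or> ruleE r s F1 u w"
    using c v u w nbE_eq[OF v] nbE_eq[OF uV] VL_eq unfolding chk2_def F1_def F0_def by blast
  then show "g w = w" using F1x rule_sound[OF F1V F1x uF1 w] by blast
qed

lemma P2: "chk2 r s \<Longrightarrow> v0 \<in> V \<Longrightarrow> g v0 = v0 \<Longrightarrow> \<forall>x\<in>Nb v0. g x = x \<Longrightarrow> w \<in> V \<Longrightarrow> g w = w"
proof -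
  assume c: "chk2 r s" and v0: "v0 \<in> V" and g0: "g v0 = v0" and n0: "\<forall>x\<in>Nb v0. g x = x" and w: "w \<in> V"
  have "(PXarc r s)\<^sup>*\<^sup>* v0 w" using reach[OF v0 w] .
  then have "g w = w \<and> (\<forall>x\<in>Nb w. g x = x)"
  proof (induction rule: rtranclp_induct)
    case base then show ?case using g0 n0 by simp
  next
    case (step a b)
    have a: "a \<in> V" using arc_V1[OF step(2)] .
    have ba: "b \<in> Nb a" using step(2) by (simp add: Nb_def adj_iff)
    then have "g b = b" using step(3) by blast
    moreover have "\<forall>x\<in>Nb b. g x = x" using P2step[OF c a _ _ ba] step(3) by blast
    ultimately show ?case by simp
  qed
  then show ?thesis by simp
qed

lemma P1: "p1 r s \<Longrightarrow> a \<in> V \<Longrightarrow> b \<in> V \<Longrightarrow> a \<noteq> b \<Longrightarrow> card (Nb a \<inter> Nb b) \<le> 2"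
proof -
  assume p: "p1 r s" and a: "a \<in> V" and b: "b \<in> V" and ab: "a \<noteq> b"
  have eq: "Nb a \<inter> Nb b = set (filter (\<lambda>z. z \<in> set (nbE r s b)) (nbE r s a))"
    using nbE_eq[OF a] nbE_eq[OF b] by auto
  have "card (Nb a \<inter> Nb b) \<le> length (filter (\<lambda>z. z \<in> set (nbE r s b)) (nbE r s a))"
    unfolding eq by (rule card_length)
  also have "\<dots> \<le> 2" using p a b ab VL_eq unfolding p1_def by blast
  finally show ?thesis .
qed

lemma NT: "r = 4 \<Longrightarrow> PXadj r s a b \<Longrightarrow> Nb a \<inter> Nb b = {}"
proof (rule ccontr)
  assume r: "r = 4" and ab: "PXadj r s a b" and ne: "Nb a \<inter> Nb b \<noteq> {}"
  obtain z where "z \<in> Nb a \<inter> Nb b" using ne by blast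
  then have "PXadj r s a z" "PXadj r s b z" unfolding Nb_def by auto
  then have "odd (lay a + lay z)" "odd (lay b + lay z)" "odd (lay a + lay b)"
    using par_adj[OF r] ab by blast+
  then show False by presburger
qed

end


context pxg begin

lemma Nb_sym: "w \<in> Nb v \<longleftrightarrow> v \<in> Nb w"
  unfolding Nb_def PXadj_def by auto

lemma case4:
  assumes r4: "r = 4" and c: "chk2 r s" and p: "p1 r s" and ne: "\<exists>v\<in>V. g v \<noteq> v"
  shows "3 * card FE \<le> card (PXE r s)"
proof -
  define D where "D = {v\<in>V. g v = v}"
  define M where "M = V - D"
  define S where "S = {w\<in>M. PXadj r s w (g w)}"
  have fD: "finite D" and fM: "finite M" and fS: "finite S"
    using fin_V unfolding D_def M_def S_def by auto
  have DV: "D \<subseteq> V" and MV: "M \<subseteq> V" and SM: "S \<subseteq> M" unfolding D_def M_def S_def by auto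
  have fNb: "\<And>v. v \<in> V \<Longrightarrow> finite (Nb v)" using fin_Nb .
  have degD: "card (Nb v \<inter> D) \<le> 2" if v: "v \<in> D" for v
  proof (rule ccontr)
    assume "\<not> card (Nb v \<inter> D) \<le> 2"
    then have c3: "3 \<le> card (Nb v \<inter> D)" by simp
    have vV: "v \<in> V" and gv: "g v = v" using v unfolding D_def by auto
    have cNb: "card (Nb v) = 4" using card_Nb[OF vV] .
    have "card (Nb v - D) = card (Nb v) - card (Nb v \<inter> D)" using fNb[OF vV] by (simp add: card_Diff_subset_Int Diff_Int2)
    then have c1: "card (Nb v - D) \<le> 1" using c3 cNb by simp
    have "Nb v \<subseteq> D"
    proof
      fix x assume x: "x \<in> Nb v"
      show "x \<in> D"
      proof (rule ccontr)
        assume xD: "x \<notin> D"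
        have xV: "x \<in> V" using x Nb_V[OF vV] by blast
        have gx: "g x \<in> Nb v" using Nb_g[OF vV] gv x by (metis imageI)
        have "g x \<notin> D"
        proof
          assume "g x \<in> D"
          then have "g (g x) = g x" unfolding D_def by simp
          then have "g x = x" using g_eq[OF gV[OF xV] xV] by simp
          then show False using xD xV unfolding D_def by simp
        qed
        then have "g x \<in> Nb v - D" "x \<in> Nb v - D" using gx x xD by auto
        moreover have "\<forall>a\<in>Nb v - D. \<forall>b\<in>Nb v - D. a = b"
          using card_le_Suc0_iff_eq[of "Nb v - D"] c1 fNb[OF vV] by simp
        ultimately have "g x = x" by blast
        then show False using xD xV unfolding D_def by simp
      qed
    qed
    then have "\<forall>x\<in>Nb v. g x = x" unfolding D_def by auto
    then have "\<forall>w\<in>V. g w = w" using P2[OF c vV gv] by blast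
    then show False using ne by blast
  qed
  have degM: "card (Nb w \<inter> D) \<le> 2" if w: "w \<in> M" for w
  proof -
    have wV: "w \<in> V" and gw: "g w \<noteq> w" using w unfolding M_def D_def by auto
    have "Nb w \<inter> D \<subseteq> Nb w \<inter> Nb (g w)"
    proof
      fix z assume z: "z \<in> Nb w \<inter> D"
      then have "g z = z" unfolding D_def by simp
      then have "z \<in> Nb (g w)" using z Nb_g[OF wV] by (metis IntD1 imageI)
      then show "z \<in> Nb w \<inter> Nb (g w)" using z by simp
    qed
    moreover have "card (Nb w \<inter> Nb (g w)) \<le> 2" using P1[OF p wV gV[OF wV]] gw by simp
    moreover have "finite (Nb w \<inter> Nb (g w))" using fNb[OF wV] by simp
    ultimately have "card (Nb w \<inter> D) \<le> card (Nb w \<inter> Nb (g w))" by (intro card_mono) auto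
    then show ?thesis using \<open>card (Nb w \<inter> Nb (g w)) \<le> 2\<close> by linarith
  qed
  have degS: "Nb w \<inter> D = {}" if w: "w \<in> S" for w
  proof -
    have wV: "w \<in> V" and adj: "PXadj r s w (g w)" using w unfolding S_def M_def by auto
    have "Nb w \<inter> D \<subseteq> Nb w \<inter> Nb (g w)"
    proof
      fix z assume z: "z \<in> Nb w \<inter> D"
      then have "g z = z" unfolding D_def by simp
      then have "z \<in> Nb (g w)" using z Nb_g[OF wV] by (metis IntD1 imageI)
      then show "z \<in> Nb w \<inter> Nb (g w)" using z by simp
    qed
    then show ?thesis using NT[OF r4 adj] by blast
  qed
  define X where "X = Sigma D (\<lambda>v. Nb v \<inter> M)"
  have cX1: "card X = (\<Sum>v\<in>D. card (Nb v \<inter> M))" unfolding X_def using fD DV fNb by (intro card_SigmaI) auto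
  have swX: "prod.swap ` X = Sigma M (\<lambda>w. Nb w \<inter> D)" unfolding X_def using Nb_sym by auto
  have cX2: "card X = (\<Sum>w\<in>M. card (Nb w \<inter> D))"
  proof -
    have "card X = card (prod.swap ` X)" by (simp add: card_image)
    also have "\<dots> = (\<Sum>w\<in>M. card (Nb w \<inter> D))" unfolding swX using fM MV fNb by (intro card_SigmaI) auto
    finally show ?thesis .
  qed
  have lo: "2 * card D \<le> card X"
  proof -
    have "\<forall>v\<in>D. 2 \<le> card (Nb v \<inter> M)"
    proof
      fix v assume v: "v \<in> D"
      have vV: "v \<in> V" using v DV by blast
      have "Nb v \<inter> M = Nb v - (Nb v \<inter> D)" using Nb_V[OF vV] unfolding M_def by blast
      then have "card (Nb v \<inter> M) = card (Nb v) - card (Nb v \<inter> D)"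
        using fNb[OF vV] by (simp add: card_Diff_subset)
      then show "2 \<le> card (Nb v \<inter> M)" using card_Nb[OF vV] degD[OF v] by simp
    qed
    then have "(\<Sum>v\<in>D. 2) \<le> (\<Sum>v\<in>D. card (Nb v \<inter> M))" by (intro sum_mono) auto
    then show ?thesis using cX1 by simp
  qed
  have hi: "card X \<le> 2 * card (M - S)"
  proof -
    have "(\<Sum>w\<in>M. card (Nb w \<inter> D)) = (\<Sum>w\<in>M - S. card (Nb w \<inter> D)) + (\<Sum>w\<in>S. card (Nb w \<inter> D))"
      by (rule sum.subset_diff[OF SM fM])
    also have "(\<Sum>w\<in>S. card (Nb w \<inter> D)) = 0" using degS by simp
    also have "(\<Sum>w\<in>M - S. card (Nb w \<inter> D)) \<le> (\<Sum>w\<in>M - S. 2)" using degM by (intro sum_mono) auto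
    finally show ?thesis using cX2 by simp
  qed
  have DMS: "card D + card S \<le> card M"
    using lo hi card_Diff_subset[OF finite_subset[OF SM fM] SM] card_mono[OF fM SM] by simp
  have cV: "card V = card D + card M"
  proof -
    have "V = D \<union> M" "D \<inter> M = {}" using DV unfolding M_def by auto
    then show ?thesis using card_Un_disjoint[OF fD fM] by simp
  qed
  define ef where "ef = (\<lambda>(a::(nat \<times> nat) list, c::nat). {a, outv a c})"
  define A where "A = {x \<in> V \<times> {0,1}. ef x \<in> FE}"
  have FEA: "FE = ef ` A"
  proof -
    have "FE \<subseteq> ef ` (V \<times> {0,1})" using edge_param unfolding FE_def ef_def by auto
    then show ?thesis unfolding A_def by auto
  qed
  have injA: "inj_on ef A" using edge_inj unfolding A_def ef_def by (rule inj_on_subset) auto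
  have fA: "finite A" unfolding A_def using fin_V by simp
  have cFE: "card FE = card A" using FEA card_image[OF injA] by simp
  have Ainfo: "x \<in> A \<Longrightarrow> fst x \<in> V \<and> snd x < 2 \<and> PXarc r s (fst x) (outv (fst x) (snd x)) \<and>
      ((g (fst x) = fst x \<and> g (outv (fst x) (snd x)) = outv (fst x) (snd x)) \<or>
       (g (fst x) = outv (fst x) (snd x) \<and> g (outv (fst x) (snd x)) = fst x))" for x
  proof -
    assume x: "x \<in> A"
    obtain a c where ac: "x = (a, c)" by (cases x)
    have a: "a \<in> V" "c < 2" using x ac unfolding A_def by auto
    have arc: "PXarc r s a (outv a c)" unfolding arc_iff using a by blast
    have "g ` {a, outv a c} = {a, outv a c}" using x ac unfolding A_def FE_def ef_def by simp
    then have "{g a, g (outv a c)} = {a, outv a c}" by simp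
    then have "(g a = a \<and> g (outv a c) = outv a c) \<or> (g a = outv a c \<and> g (outv a c) = a)"
      by (auto simp: doubleton_eq_iff)
    then show ?thesis using a arc ac by simp
  qed
  define A1 where "A1 = {x\<in>A. g (fst x) = fst x}"
  define A2 where "A2 = {x\<in>A. g (fst x) \<noteq> fst x}"
  have cA: "card A = card A1 + card A2"
  proof -
    have "A = A1 \<union> A2" "A1 \<inter> A2 = {}" unfolding A1_def A2_def by auto
    moreover have "finite A1" "finite A2" using fA unfolding A1_def A2_def by auto
    ultimately show ?thesis by (simp add: card_Un_disjoint)
  qed
  define ArcD where "ArcD = {(a,b). a \<in> D \<and> b \<in> D \<and> PXarc r s a b}"
  have cA1: "card A1 \<le> card ArcD"
  proof -
    have "(\<lambda>x. (fst x, outv (fst x) (snd x))) ` A1 \<subseteq> ArcD"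
    proof
      fix y assume "y \<in> (\<lambda>x. (fst x, outv (fst x) (snd x))) ` A1"
      then obtain x where x: "x \<in> A1" "y = (fst x, outv (fst x) (snd x))" by blast
      have xA: "x \<in> A" and gx: "g (fst x) = fst x" using x unfolding A1_def by auto
      have i: "fst x \<in> V" "PXarc r s (fst x) (outv (fst x) (snd x))" using Ainfo[OF xA] by auto
      have "g (outv (fst x) (snd x)) = outv (fst x) (snd x)"
        using Ainfo[OF xA] gx arc_neq[OF i(2)] by auto
      then show "y \<in> ArcD" using i gx x(2) arc_V2[OF i(2)] unfolding ArcD_def D_def by auto
    qed
    moreover have "inj_on (\<lambda>x. (fst x, outv (fst x) (snd x))) A1"
    proof (rule inj_onI)
      fix x y assume "x \<in> A1" "y \<in> A1" and h: "(fst x, outv (fst x) (snd x)) = (fst y, outv (fst y) (snd y))"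
      have xV: "fst x \<in> V" using Ainfo[of x] \<open>x \<in> A1\<close> unfolding A1_def by auto
      have e: "fst x = fst y \<and> outv (fst x) (snd x) = outv (fst y) (snd y)" using h by (rule Pair_inject) (rule conjI)
      have e1: "fst x = fst y" using e by (rule conjunct1)
      have e2: "outv (fst x) (snd x) = outv (fst y) (snd y)" using e by (rule conjunct2)
      have "outv (fst x) (snd x) = outv (fst x) (snd y)" using e2 unfolding e1 .
      then have "snd x = snd y" using outv_inj[OF xV] by blast
      then show "x = y" using \<open>(fst x, outv (fst x) (snd x)) = (fst y, outv (fst y) (snd y))\<close> by (simp add: prod_eq_iff)
    qed
    moreover have "finite ArcD"
    proof -
      have "ArcD \<subseteq> D \<times> D" unfolding ArcD_def by auto
      then show ?thesis using fD finite_subset by blast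
    qed
    ultimately show ?thesis by (simp add: card_mono card_image[symmetric])
  qed
  have cArc: "2 * card ArcD \<le> 2 * card D"
  proof -
    have e1: "ArcD = Sigma D (\<lambda>a. outs a \<inter> D)" unfolding ArcD_def using out_mem arc_V1 DV by auto
    have e2: "prod.swap ` ArcD = Sigma D (\<lambda>b. ins b \<inter> D)"
    proof (rule set_eqI)
      fix p :: "(nat \<times> nat) list \<times> (nat \<times> nat) list"
      obtain b a where p: "p = (b, a)" by (cases p)
      have "p \<in> prod.swap ` ArcD \<longleftrightarrow> (a, b) \<in> ArcD" unfolding p
      proof
        assume "(a, b) \<in> ArcD" then show "(b, a) \<in> prod.swap ` ArcD" by (rule rev_image_eqI) simp
      qed auto
      also have "\<dots> \<longleftrightarrow> a \<in> D \<and> b \<in> D \<and> PXarc r s a b" unfolding ArcD_def by simp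
      also have "\<dots> \<longleftrightarrow> b \<in> D \<and> a \<in> ins b \<inter> D" using in_mem DV by blast
      also have "\<dots> \<longleftrightarrow> p \<in> Sigma D (\<lambda>b. ins b \<inter> D)" unfolding p by simp
      finally show "p \<in> prod.swap ` ArcD \<longleftrightarrow> p \<in> Sigma D (\<lambda>b. ins b \<inter> D)" .
    qed
    have fo: "\<And>a. a \<in> D \<Longrightarrow> finite (outs a \<inter> D)" by (simp add: outs_def)
    have fi: "\<And>a. a \<in> D \<Longrightarrow> finite (ins a \<inter> D)" by (simp add: ins_def)
    have c1: "card ArcD = (\<Sum>a\<in>D. card (outs a \<inter> D))" unfolding e1 using fD fo by (intro card_SigmaI) auto
    have c2: "card ArcD = (\<Sum>a\<in>D. card (ins a \<inter> D))"
    proof -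
      have "card ArcD = card (prod.swap ` ArcD)" by (simp add: card_image)
      also have "\<dots> = (\<Sum>a\<in>D. card (ins a \<inter> D))" unfolding e2 using fD fi by (intro card_SigmaI) auto
      finally show ?thesis .
    qed
    have "2 * card ArcD = (\<Sum>a\<in>D. card (outs a \<inter> D) + card (ins a \<inter> D))" using c1 c2 by (simp add: sum.distrib)
    also have "\<dots> = (\<Sum>a\<in>D. card (Nb a \<inter> D))"
    proof (rule sum.cong[OF refl])
      fix a assume a: "a \<in> D"
      then have aV: "a \<in> V" using DV by blast
      have "Nb a \<inter> D = (outs a \<inter> D) \<union> (ins a \<inter> D)" using Nb_eq[OF aV] by blast
      moreover have "(outs a \<inter> D) \<inter> (ins a \<inter> D) = {}" using outs_ins_disj[OF aV] by blast
      ultimately show "card (outs a \<inter> D) + card (ins a \<inter> D) = card (Nb a \<inter> D)"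
        using fo[OF a] fi[OF a] by (simp add: card_Un_disjoint)
    qed
    also have "\<dots> \<le> (\<Sum>a\<in>D. 2)" using degD by (intro sum_mono) auto
    finally show ?thesis by simp
  qed
  define T where "T = {a\<in>V. g a \<noteq> a \<and> PXarc r s a (g a) \<and> g (g a) = a}"
  have fT: "finite T" unfolding T_def using fin_V by simp
  have cA2: "card A2 \<le> card T"
  proof -
    have "fst ` A2 \<subseteq> T"
    proof
      fix a assume "a \<in> fst ` A2"
      then obtain x where x: "x \<in> A2" "a = fst x" by blast
      have xA: "x \<in> A" and gx: "g (fst x) \<noteq> fst x" using x unfolding A2_def by auto
      show "a \<in> T" using Ainfo[OF xA] gx x(2) unfolding T_def by auto
    qed
    moreover have "inj_on fst A2"
    proof (rule inj_onI)
      fix x y assume x: "x \<in> A2" and y: "y \<in> A2" and e: "fst x = fst y"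
      have xA: "x \<in> A" "g (fst x) \<noteq> fst x" and yA: "y \<in> A" "g (fst y) \<noteq> fst y" using x y unfolding A2_def by auto
      have "g (fst x) = outv (fst x) (snd x)" "fst x \<in> V" using Ainfo[OF xA(1)] xA(2) by auto
      moreover have "g (fst y) = outv (fst y) (snd y)" using Ainfo[OF yA(1)] yA(2) by auto
      ultimately have "snd x = snd y" using e outv_inj by simp
      then show "x = y" using e by (simp add: prod_eq_iff)
    qed
    ultimately show ?thesis using fT by (simp add: card_mono card_image[symmetric])
  qed
  have cT: "2 * card T \<le> card S"
  proof -
    have TS: "T \<subseteq> S" unfolding T_def S_def M_def D_def by (auto simp: adj_iff)
    have gTS: "g ` T \<subseteq> S"
    proof
      fix w assume "w \<in> g ` T"
      then obtain a where a: "a \<in> T" "w = g a" by blast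
      have aV: "a \<in> V" and arc: "PXarc r s a (g a)" and gga: "g (g a) = a" and ga: "g a \<noteq> a" using a unfolding T_def by auto
      have "w \<in> V" using a gV aV by simp
      moreover have "g w \<noteq> w" using a gga ga by simp
      moreover have "PXadj r s w (g w)" using a gga arc by (simp add: adj_iff)
      ultimately show "w \<in> S" unfolding S_def M_def D_def by simp
    qed
    have disj: "T \<inter> g ` T = {}"
    proof (rule ccontr)
      assume "T \<inter> g ` T \<noteq> {}"
      then obtain a b where a: "a \<in> T" and b: "b \<in> T" and ab: "a = g b" by blast
      have "PXarc r s b a" using b ab unfolding T_def by simp
      moreover have "PXarc r s a b" using a b ab unfolding T_def by simp
      ultimately show False using no_2cycle by blast
    qed
    have TV: "T \<subseteq> V" unfolding T_def by auto
    have cg: "card (g ` T) = card T" using card_image[OF inj_on_subset[OF g_inj TV]] .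
    have "card (T \<union> g ` T) = card T + card (g ` T)" using card_Un_disjoint[OF fT _ disj] fT by simp
    moreover have "card (T \<union> g ` T) \<le> card S" using TS gTS fS by (intro card_mono) auto
    ultimately show ?thesis using cg by simp
  qed
  have "2 * card FE \<le> card V" using cFE cA cA1 cArc cA2 cT DMS cV by linarith
  then show ?thesis using card_E by simp
qed

end


lemma chk42: "chk2 4 2" by code_simp
lemma chk43: "chk2 4 3" by code_simp
lemma p142: "p1 4 2" by code_simp
lemma p143: "p1 4 3" by code_simp

context pxg begin

theorem main_pxg:
  assumes ne: "\<exists>v \<in> V. g v \<noteq> v" and f: "fpr_edges (PXE r s) g > 1 / 3"
  shows "3 * s < 2 * r - 3
     \<and> ((\<exists>k \<in> PXK r. \<forall>v \<in> V. g v = map k v) \<or> (r = 4 \<and> s = 1))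
     \<and> (\<forall>e \<in> PXE r s. g ` e = e \<longrightarrow> (\<forall>v \<in> e. g v = v))"
proof (cases "r = 4")
  case r4: True
  show ?thesis
  proof (cases "s = 1")
    case True
    then show ?thesis using case41[OF r4 True f] r4 by simp
  next
    case False
    then have "s = 2 \<or> s = 3" using s1 sr r4 by auto
    then have "chk2 r s \<and> p1 r s" using r4 chk42 chk43 p142 p143 by auto
    then have "3 * card FE \<le> card (PXE r s)" using case4[OF r4 _ _ ne] by blast
    then show ?thesis using fpr_big[OF f] by simp
  qed
next
  case r4: False
  obtain v0 where v0: "v0 \<in> V" using ne by blast
  show ?thesis
  proof (cases "pres v0")
    case True
    have hp: "\<And>a b. PXarc r s a b \<Longrightarrow> PXarc r s (g a) (g b)" using arc_pres[OF r4 v0 True] .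
    obtain d where d: "d < r" "\<forall>v\<in>V. lay (g v) = (lay v + d) mod r" using shift[OF hp v0] by blast
    show ?thesis
    proof (cases "d = 0")
      case True
      have hl: "\<And>v. v \<in> V \<Longrightarrow> lay (g v) = lay v" using d(2) True V_lay by simp
      interpret pxk r s g by unfold_locales (use hp hl in auto)
      show ?thesis using K_result[OF ne f] by blast
    next
      case False
      then have "FE = {}" using FE_rot[of d] d by simp
      then show ?thesis using fpr_big[OF f] by simp
    qed
  next
    case False
    have hr: "\<And>a b. PXarc r s a b \<Longrightarrow> PXarc r s (g b) (g a)" using arc_rev[OF r4 v0 False] .
    have "fpr_edges (PXE r s) g \<le> 1 / 3" using fpr_small[OF FE_rev[OF hr v0]] .
    then show ?thesis using f by simp
  qed
qed

end

theorem lemma3p5: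
  fixes r s :: nat and g :: "(nat \<times> nat) list \<Rightarrow> (nat \<times> nat) list"
  assumes "r \<ge> 3" and "1 \<le> s" and "s \<le> r - 1"
    and "is_graph_aut (PXV r s) (PXadj r s) g"
    and "\<exists>v \<in> PXV r s. g v \<noteq> v"
    and "fpr_edges (PXE r s) g > 1 / 3"
  shows "3 * s < 2 * r - 3
     \<and> ((\<exists>k \<in> PXK r. \<forall>v \<in> PXV r s. g v = map k v) \<or> (r = 4 \<and> s = 1))
     \<and> (\<forall>e \<in> PXE r s. g ` e = e \<longrightarrow> (\<forall>v \<in> e. g v = v))"
proof -
  interpret pxg r s g
    by unfold_locales (use assms in auto)
  show ?thesis using main_pxg assms(5,6) by blast
qed


end
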